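(* Consider the finite-horizon setting below with horizon $T$, transitions $P$, and agent rewards $\rho$, with $p_{\mathrm{maj}},p_{\mathrm{min}}>0$. Let $R_{\max}>0$ with $|R_{s,a}|\le R_{\max}$ and $|\rho_{s,a}|\le R_{\max}$ for all $s,a$. Let $\pi_0$ be a policy with $\Lambda^{(\pi_0)}_{s,a}\ge\lambda_0$ for all $s\in S,a\in A$, for some $\lambda_0>0$. Let $\epsilon,\delta>0$ and let $N_0\ge\dfrac{128\,T^2|S|^2R_{\max}^2\log(2|S|^2|A|/\delta)}{\lambda_0^2\epsilon^2}$. Run $N_0$ independent episodes of $\pi_0$ and form the empirical transition estimate $\hat P$ as described below; let $\hat M$ denote the model with $P$ replaced by $\hat P$. Assume $\Pi_{\mathrm{DP},\epsilon/4}\ne\varnothing$ and let $\pi^*$ be a maximizer of $R^{(\pi)}$ over $\Pi_{\mathrm{DP},\epsilon/4}$ (computed in the true model). Then with probability at least $1-\delta$ over the episodes, the set $\hat\Pi_{\mathrm{DP},\epsilon/2}$ (computed in $\hat M$) is nonempty, and every maximizer $\hat\pi$ of $\hat R^{(\pi)}$ over $\hat\Pi_{\mathrm{DP},\epsilon/2}$ satisfies $\hat\pi\in\Pi_{\mathrm{DP},\epsilon}$ and $R^{(\pi^* )}-R^{(\hat\pi)}\le\epsilon$, where $R^{(\cdot)}$ and $\Pi_{\mathrm{DP},\epsilon}$ refer to the true model.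
   Context: Finite-horizon setting: $S,A$ finite nonempty sets, $D$ a probability distribution on $S$, transition kernel $P$ ($P_{s,a,s'}\ge0$, $\sum_{s'}P_{s,a,s'}=1$), rewards $R\in\mathbb{R}^{S\times A}$, horizon $T\in\mathbb{N}_{\ge1}$. A policy is $\pi\in\mathbb{R}^{S\times A}$ with $\pi_{s,a}\ge0$, $\sum_a\pi_{s,a}=1$. Let $P^{(\pi)}_{s,s'}=\sum_a\pi_{s,a}P_{s,a,s'}$; for a distribution $\mu$, $\mu^{(\pi,0)}=\mu$, $\mu^{(\pi,t)}_{s'}=\sum_s\mu^{(\pi,t-1)}_sP^{(\pi)}_{s,s'}$, and $\bar\mu^{(\pi)}=\frac1T\sum_{t=0}^{T-1}\mu^{(\pi,t)}$. Let $\Lambda^{(\pi)}_{s,a}=\bar D^{(\pi)}_s\pi_{s,a}$ and $R^{(\pi)}=\sum_{s,a}\Lambda^{(\pi)}_{s,a}R_{s,a}$. Fairness: $S=Z\times\tilde S$, $Z=\{\mathrm{maj},\mathrm{min}\}$, agent rewards $\rho\in\mathbb{R}^{S\times A}$; $p_z=\sum_{\tilde s}D_{(z,\tilde s)}$, $(D_z)_s=D_s\mathbb{I}[s=(z,\tilde s)\text{ for some }\tilde s]/p_z$; $\rho_z^{(\pi)}=\sum_{s,a}(\bar D_z^{(\pi)})_s\pi_{s,a}\rho_{s,a}$ where $\bar D_z^{(\pi)}$ is $\bar\mu^{(\pi)}$ for $\mu=D_z$; $\Pi_{\mathrm{DP},\eta}=\{\pi:|\rho_{\mathrm{maj}}^{(\pi)}-\rho_{\mathrm{min}}^{(\pi)}|\le\eta\}$.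 The same quantities with $P$ replaced by $\hat P$ are denoted $\hat R^{(\pi)},\hat\rho_z^{(\pi)},\hat\Pi_{\mathrm{DP},\eta}$. An episode of $\pi_0$ is a random trajectory $s_0\sim D$, $a_t\sim(\pi_0)_{s_t,\cdot}$, $s_{t+1}\sim P_{s_t,a_t,\cdot}$ for $t=0,\dots,T-1$, producing the observed tuples $(s_t,a_t,s_{t+1})$; episodes are independent. $\hat P_{s,a,s'}$ is the number of observed tuples $(s,a,s')$ divided by the number of observed tuples of the form $(s,a,\cdot)$ (an arbitrary distribution if the latter is $0$). *)

theory Defs
  imports Complex_Main
begin

definition is_distr :: "('st::finite \<Rightarrow> real) \<Rightarrow> bool" where
  "is_distr \<mu> \<longleftrightarrow> (\<forall>s. \<mu> s \<ge> 0) \<and> (\<Sum>s\<in>UNIV. \<mu> s) = 1"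

definition is_kernel :: "('st::finite \<Rightarrow> 'a::finite \<Rightarrow> 'st \<Rightarrow> real) \<Rightarrow> bool" where
  "is_kernel P \<longleftrightarrow> (\<forall>s a s'. P s a s' \<ge> 0) \<and> (\<forall>s a. (\<Sum>s'\<in>UNIV. P s a s') = 1)"

definition is_policy :: "('st::finite \<Rightarrow> 'a::finite \<Rightarrow> real) \<Rightarrow> bool" where
  "is_policy \<pi> \<longleftrightarrow> (\<forall>s a. \<pi> s a \<ge> 0) \<and> (\<forall>s. (\<Sum>a\<in>UNIV. \<pi> s a) = 1)"

definition Ppi :: "('st::finite \<Rightarrow> 'a::finite \<Rightarrow> 'st \<Rightarrow> real) \<Rightarrow> ('st \<Rightarrow> 'a \<Rightarrow> real) \<Rightarrow> 'st \<Rightarrow> 'st \<Rightarrow> real" where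
  "Ppi P \<pi> s s' = (\<Sum>a\<in>UNIV. \<pi> s a * P s a s')"

fun mu_t :: "('st::finite \<Rightarrow> 'a::finite \<Rightarrow> 'st \<Rightarrow> real) \<Rightarrow> ('st \<Rightarrow> 'a \<Rightarrow> real) \<Rightarrow> ('st \<Rightarrow> real) \<Rightarrow> nat \<Rightarrow> 'st \<Rightarrow> real" where
  "mu_t P \<pi> \<mu> 0 = \<mu>"
| "mu_t P \<pi> \<mu> (Suc t) = (\<lambda>s'. \<Sum>s\<in>UNIV. mu_t P \<pi> \<mu> t s * Ppi P \<pi> s s')"

definition mu_bar :: "nat \<Rightarrow> ('st::finite \<Rightarrow> 'a::finite \<Rightarrow> 'st \<Rightarrow> real) \<Rightarrow> ('st \<Rightarrow> 'a \<Rightarrow> real) \<Rightarrow> ('st \<Rightarrow> real) \<Rightarrow> 'st \<Rightarrow> real" where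
  "mu_bar T P \<pi> \<mu> s = (1 / real T) * (\<Sum>t<T. mu_t P \<pi> \<mu> t s)"

definition Lam :: "nat \<Rightarrow> ('st::finite \<Rightarrow> 'a::finite \<Rightarrow> 'st \<Rightarrow> real) \<Rightarrow> ('st \<Rightarrow> real) \<Rightarrow> ('st \<Rightarrow> 'a \<Rightarrow> real) \<Rightarrow> 'st \<Rightarrow> 'a \<Rightarrow> real" where
  "Lam T P D \<pi> s a = mu_bar T P \<pi> D s * \<pi> s a"

definition Rval :: "nat \<Rightarrow> ('st::finite \<Rightarrow> 'a::finite \<Rightarrow> 'st \<Rightarrow> real) \<Rightarrow> ('st \<Rightarrow> real) \<Rightarrow> ('st \<Rightarrow> 'a \<Rightarrow> real) \<Rightarrow> ('st \<Rightarrow> 'a \<Rightarrow> real) \<Rightarrow> real" where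
  "Rval T P D R \<pi> = (\<Sum>s\<in>UNIV. \<Sum>a\<in>UNIV. Lam T P D \<pi> s a * R s a)"

datatype grp = Maj | Min

lemma UNIV_grp: "(UNIV :: grp set) = {Maj, Min}"
  using grp.exhaust by auto

instance grp :: finite
  by standard (simp add: UNIV_grp)

definition p_grp :: "(grp \<times> 's::finite \<Rightarrow> real) \<Rightarrow> grp \<Rightarrow> real" where
  "p_grp D z = (\<Sum>s\<in>UNIV. D (z, s))"

definition D_grp :: "(grp \<times> 's::finite \<Rightarrow> real) \<Rightarrow> grp \<Rightarrow> grp \<times> 's \<Rightarrow> real" where
  "D_grp D z x = (if fst x = z then D x / p_grp D z else 0)"

definition rho_grp :: "nat \<Rightarrow> (grp \<times> 's::finite \<Rightarrow> 'a::finite \<Rightarrow> grp \<times> 's \<Rightarrow> real) \<Rightarrow> (grp \<times> 's \<Rightarrow> real)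
    \<Rightarrow> (grp \<times> 's \<Rightarrow> 'a \<Rightarrow> real) \<Rightarrow> (grp \<times> 's \<Rightarrow> 'a \<Rightarrow> real) \<Rightarrow> grp \<Rightarrow> real" where
  "rho_grp T P D \<rho> \<pi> z = (\<Sum>s\<in>UNIV. \<Sum>a\<in>UNIV. mu_bar T P \<pi> (D_grp D z) s * \<pi> s a * \<rho> s a)"

definition PiDP :: "nat \<Rightarrow> (grp \<times> 's::finite \<Rightarrow> 'a::finite \<Rightarrow> grp \<times> 's \<Rightarrow> real) \<Rightarrow> (grp \<times> 's \<Rightarrow> real)
    \<Rightarrow> (grp \<times> 's \<Rightarrow> 'a \<Rightarrow> real) \<Rightarrow> real \<Rightarrow> (grp \<times> 's \<Rightarrow> 'a \<Rightarrow> real) set" where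
  "PiDP T P D \<rho> \<eta> = {\<pi>. is_policy \<pi> \<and> \<bar>rho_grp T P D \<rho> \<pi> Maj - rho_grp T P D \<rho> \<pi> Min\<bar> \<le> \<eta>}"

text \<open>An episode is the list of its T observed tuples (s_t, a_t, s_{t+1}), t = 0..T-1.\<close>
definition valid_traj :: "nat \<Rightarrow> ('st \<times> 'a \<times> 'st) list \<Rightarrow> bool" where
  "valid_traj T tr \<longleftrightarrow> length tr = T \<and>
     (\<forall>i. Suc i < T \<longrightarrow> snd (snd (tr ! i)) = fst (tr ! Suc i))"

definition traj_prob :: "('st \<Rightarrow> real) \<Rightarrow> ('st \<Rightarrow> 'a \<Rightarrow> 'st \<Rightarrow> real) \<Rightarrow> ('st \<Rightarrow> 'a \<Rightarrow> real)
    \<Rightarrow> ('st \<times> 'a \<times> 'st) list \<Rightarrow> real" where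
  "traj_prob D P \<pi>0 tr = D (fst (hd tr)) *
     (\<Prod>i<length tr. (case tr ! i of (s, a, s') \<Rightarrow> \<pi>0 s a * P s a s'))"

definition datasets :: "nat \<Rightarrow> nat \<Rightarrow> ('st \<times> 'a \<times> 'st) list list set" where
  "datasets T N = {ds. length ds = N \<and> (\<forall>tr\<in>set ds. valid_traj T tr)}"

definition data_prob :: "nat \<Rightarrow> nat \<Rightarrow> ('st \<Rightarrow> real) \<Rightarrow> ('st \<Rightarrow> 'a \<Rightarrow> 'st \<Rightarrow> real) \<Rightarrow> ('st \<Rightarrow> 'a \<Rightarrow> real)
    \<Rightarrow> (('st \<times> 'a \<times> 'st) list list \<Rightarrow> bool) \<Rightarrow> real" where
  "data_prob T N D P \<pi>0 E =
     (\<Sum>ds\<in>{ds\<in>datasets T N. E ds}. prod_list (map (traj_prob D P \<pi>0) ds))"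

definition count_sas :: "('st \<times> 'a \<times> 'st) list list \<Rightarrow> 'st \<Rightarrow> 'a \<Rightarrow> 'st \<Rightarrow> nat" where
  "count_sas ds s a s' = length (filter (\<lambda>x. x = (s, a, s')) (concat ds))"

definition count_sa :: "('st \<times> 'a \<times> 'st) list list \<Rightarrow> 'st \<Rightarrow> 'a \<Rightarrow> nat" where
  "count_sa ds s a = length (filter (\<lambda>x. fst x = s \<and> fst (snd x) = a) (concat ds))"

text \<open>Empirical transition estimate; Q is the (arbitrary) distribution used for unvisited (s,a).\<close>
definition P_hat :: "('st \<Rightarrow> 'a \<Rightarrow> 'st \<Rightarrow> real) \<Rightarrow> ('st \<times> 'a \<times> 'st) list list \<Rightarrow> 'st \<Rightarrow> 'a \<Rightarrow> 'st \<Rightarrow> real" where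
  "P_hat Q ds s a s' = (if count_sa ds s a = 0 then Q s a s'
                        else real (count_sas ds s a s') / real (count_sa ds s a))"

end

theory Submission
  imports Defs "HOL-Probability.Hoeffding"
begin

lemma Ppi_nonneg: "is_kernel P \<Longrightarrow> is_policy \<pi> \<Longrightarrow> Ppi P \<pi> s s' \<ge> 0"
  unfolding Ppi_def is_kernel_def is_policy_def by (auto intro!: sum_nonneg)

lemma Ppi_sum: "is_kernel P \<Longrightarrow> is_policy \<pi> \<Longrightarrow> (\<Sum>s'\<in>UNIV. Ppi P \<pi> s s') = 1"
  unfolding Ppi_def is_kernel_def is_policy_def
  by (subst sum.swap) (simp add: sum_distrib_left[symmetric])

lemma mu_t_distr:
  assumes "is_distr \<mu>" "is_kernel P" "is_policy \<pi>"
  shows "is_distr (mu_t P \<pi> \<mu> t)"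
proof (induction t)
  case 0 then show ?case using assms by simp
next
  case (Suc t)
  have "(\<Sum>s'\<in>UNIV. \<Sum>s\<in>UNIV. mu_t P \<pi> \<mu> t s * Ppi P \<pi> s s') = (\<Sum>s\<in>UNIV. mu_t P \<pi> \<mu> t s)"
    by (subst sum.swap) (simp add: sum_distrib_left[symmetric] Ppi_sum assms)
  then show ?case using Suc assms unfolding is_distr_def
    by (auto intro!: sum_nonneg mult_nonneg_nonneg Ppi_nonneg)
qed

lemma mu_t_nonneg: "is_distr \<mu> \<Longrightarrow> is_kernel P \<Longrightarrow> is_policy \<pi> \<Longrightarrow> mu_t P \<pi> \<mu> t s \<ge> 0"
  using mu_t_distr unfolding is_distr_def by blast

lemma mu_t_sum: "is_distr \<mu> \<Longrightarrow> is_kernel P \<Longrightarrow> is_policy \<pi> \<Longrightarrow> (\<Sum>s\<in>UNIV. mu_t P \<pi> \<mu> t s) = 1"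
  using mu_t_distr unfolding is_distr_def by blast

lemma mu_bar_nonneg: "is_distr \<mu> \<Longrightarrow> is_kernel P \<Longrightarrow> is_policy \<pi> \<Longrightarrow> mu_bar T P \<pi> \<mu> s \<ge> 0"
  unfolding mu_bar_def by (auto intro!: sum_nonneg mu_t_nonneg divide_nonneg_nonneg)

lemma mu_bar_sum: "T \<ge> 1 \<Longrightarrow> is_distr \<mu> \<Longrightarrow> is_kernel P \<Longrightarrow> is_policy \<pi> \<Longrightarrow> (\<Sum>s\<in>UNIV. mu_bar T P \<pi> \<mu> s) = 1"
proof -
  assume a: "T \<ge> 1" "is_distr \<mu>" "is_kernel P" "is_policy \<pi>"
  have "(\<Sum>s\<in>UNIV. mu_bar T P \<pi> \<mu> s) = (1 / real T) * (\<Sum>t<T. \<Sum>s\<in>UNIV. mu_t P \<pi> \<mu> t s)"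
    unfolding mu_bar_def by (simp only: sum_distrib_left[symmetric], subst sum.swap, rule refl)
  also have "\<dots> = 1" using a by (simp add: mu_t_sum)
  finally show ?thesis .
qed

lemma sim_step:
  assumes "is_distr \<mu>" "is_kernel P" "is_kernel P'" "is_policy \<pi>"
    and L1: "\<forall>s a. (\<Sum>s'\<in>UNIV. \<bar>P s a s' - P' s a s'\<bar>) \<le> e"
  shows "(\<Sum>s\<in>UNIV. \<bar>mu_t P \<pi> \<mu> t s - mu_t P' \<pi> \<mu> t s\<bar>) \<le> real t * e"
proof (induction t)
  case 0 then show ?case by simp
next
  case (Suc t)
  define m where "m = mu_t P \<pi> \<mu> t"
  define m' where "m' = mu_t P' \<pi> \<mu> t"
  have m0: "m s \<ge> 0" for s unfolding m_def using mu_t_nonneg assms by blast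
  have msum: "(\<Sum>s\<in>UNIV. m s) = 1" unfolding m_def using mu_t_sum assms by blast
  have pp: "(\<Sum>s'\<in>UNIV. \<bar>Ppi P \<pi> s s' - Ppi P' \<pi> s s'\<bar>) \<le> e" for s
  proof -
    have "(\<Sum>s'\<in>UNIV. \<bar>Ppi P \<pi> s s' - Ppi P' \<pi> s s'\<bar>)
        = (\<Sum>s'\<in>UNIV. \<bar>\<Sum>a\<in>UNIV. \<pi> s a * (P s a s' - P' s a s')\<bar>)"
      unfolding Ppi_def by (simp add: sum_subtractf[symmetric] algebra_simps)
    also have "\<dots> \<le> (\<Sum>s'\<in>UNIV. \<Sum>a\<in>UNIV. \<pi> s a * \<bar>P s a s' - P' s a s'\<bar>)"
      using assms(4) unfolding is_policy_def
      by (intro sum_mono order.trans[OF sum_abs]) (simp add: abs_mult)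
    also have "\<dots> = (\<Sum>a\<in>UNIV. \<pi> s a * (\<Sum>s'\<in>UNIV. \<bar>P s a s' - P' s a s'\<bar>))"
      by (subst sum.swap) (simp add: sum_distrib_left)
    also have "\<dots> \<le> (\<Sum>a\<in>UNIV. \<pi> s a * e)"
      using assms(4) L1 unfolding is_policy_def by (intro sum_mono mult_left_mono) auto
    also have "\<dots> = e" using assms(4) unfolding is_policy_def by (simp add: sum_distrib_right[symmetric])
    finally show ?thesis .
  qed
  have key: "\<bar>(\<Sum>s\<in>UNIV. m s * Ppi P \<pi> s s') - (\<Sum>s\<in>UNIV. m' s * Ppi P' \<pi> s s')\<bar>
      \<le> (\<Sum>s\<in>UNIV. m s * \<bar>Ppi P \<pi> s s' - Ppi P' \<pi> s s'\<bar>) + (\<Sum>s\<in>UNIV. \<bar>m s - m' s\<bar> * Ppi P' \<pi> s s')" for s'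
  proof -
    have eq: "(\<Sum>s\<in>UNIV. m s * Ppi P \<pi> s s') - (\<Sum>s\<in>UNIV. m' s * Ppi P' \<pi> s s')
       = (\<Sum>s\<in>UNIV. m s * (Ppi P \<pi> s s' - Ppi P' \<pi> s s') + (m s - m' s) * Ppi P' \<pi> s s')"
      by (simp add: sum_subtractf[symmetric] algebra_simps)
    have "\<bar>(\<Sum>s\<in>UNIV. m s * Ppi P \<pi> s s') - (\<Sum>s\<in>UNIV. m' s * Ppi P' \<pi> s s')\<bar>
       \<le> (\<Sum>s\<in>UNIV. \<bar>m s * (Ppi P \<pi> s s' - Ppi P' \<pi> s s') + (m s - m' s) * Ppi P' \<pi> s s'\<bar>)"
      unfolding eq by (rule sum_abs)
    also have "\<dots> \<le> (\<Sum>s\<in>UNIV. m s * \<bar>Ppi P \<pi> s s' - Ppi P' \<pi> s s'\<bar> + \<bar>m s - m' s\<bar> * Ppi P' \<pi> s s')"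
      by (rule sum_mono, rule order.trans[OF abs_triangle_ineq])
         (simp add: abs_mult abs_of_nonneg[OF m0] abs_of_nonneg[OF Ppi_nonneg[OF assms(3,4)]])
    finally show ?thesis by (simp only: sum.distrib)
  qed
  have "(\<Sum>s'\<in>UNIV. \<bar>mu_t P \<pi> \<mu> (Suc t) s' - mu_t P' \<pi> \<mu> (Suc t) s'\<bar>)
     \<le> (\<Sum>s'\<in>UNIV. (\<Sum>s\<in>UNIV. m s * \<bar>Ppi P \<pi> s s' - Ppi P' \<pi> s s'\<bar>) + (\<Sum>s\<in>UNIV. \<bar>m s - m' s\<bar> * Ppi P' \<pi> s s'))"
    unfolding m_def m'_def by (rule sum_mono) (subst mu_t.simps, subst mu_t.simps, rule key[unfolded m_def m'_def])
  also have "\<dots> = (\<Sum>s\<in>UNIV. m s * (\<Sum>s'\<in>UNIV. \<bar>Ppi P \<pi> s s' - Ppi P' \<pi> s s'\<bar>))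
        + (\<Sum>s\<in>UNIV. \<bar>m s - m' s\<bar> * (\<Sum>s'\<in>UNIV. Ppi P' \<pi> s s'))"
    by (simp only: sum.distrib, subst (1 2) sum.swap, simp add: sum_distrib_left)
  also have "\<dots> \<le> (\<Sum>s\<in>UNIV. m s * e) + real t * e"
    using Suc pp m0 Ppi_sum[OF assms(3,4)] unfolding m_def m'_def
    by (intro add_mono sum_mono mult_left_mono) auto
  also have "\<dots> = real (Suc t) * e" using msum by (simp only: sum_distrib_right[symmetric]) (simp add: algebra_simps)
  finally show ?case .
qed

lemma sum_real_lt: "(\<Sum>t<T. real t) \<le> real T ^ 2 / 2"
proof (induction T)
  case 0 then show ?case by simp
next
  case (Suc T) then show ?case by (simp add: power2_eq_square field_simps)
qed

lemma val_diff:
  assumes T: "T \<ge> 1" and "is_distr \<mu>" "is_kernel P" "is_kernel P'" "is_policy \<pi>"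
    and L1: "\<forall>s a. (\<Sum>s'\<in>UNIV. \<bar>P s a s' - P' s a s'\<bar>) \<le> e" and e: "e \<ge> 0"
    and f: "\<forall>s a. \<bar>f s a\<bar> \<le> B"
  shows "\<bar>(\<Sum>s\<in>UNIV. \<Sum>a\<in>UNIV. mu_bar T P \<pi> \<mu> s * \<pi> s a * f s a)
         - (\<Sum>s\<in>UNIV. \<Sum>a\<in>UNIV. mu_bar T P' \<pi> \<mu> s * \<pi> s a * f s a)\<bar> \<le> B * (real T * e / 2)"
proof -
  have B: "B \<ge> 0" using f abs_ge_zero order.trans by blast
  have inner: "\<bar>\<Sum>a\<in>UNIV. \<pi> s a * f s a\<bar> \<le> B" for s
  proof -
    have "\<bar>\<Sum>a\<in>UNIV. \<pi> s a * f s a\<bar> \<le> (\<Sum>a\<in>UNIV. \<pi> s a * B)"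
      using assms(5) f unfolding is_policy_def
      by (intro order.trans[OF sum_abs] sum_mono) (simp add: abs_mult mult_left_mono)
    also have "\<dots> = B" using assms(5) unfolding is_policy_def by (simp add: sum_distrib_right[symmetric])
    finally show ?thesis .
  qed
  have mb: "(\<Sum>s\<in>UNIV. \<bar>mu_bar T P \<pi> \<mu> s - mu_bar T P' \<pi> \<mu> s\<bar>) \<le> real T * e / 2"
  proof -
    have "(\<Sum>s\<in>UNIV. \<bar>mu_bar T P \<pi> \<mu> s - mu_bar T P' \<pi> \<mu> s\<bar>)
        = (\<Sum>s\<in>UNIV. (1 / real T) * \<bar>\<Sum>t<T. mu_t P \<pi> \<mu> t s - mu_t P' \<pi> \<mu> t s\<bar>)"
      unfolding mu_bar_def right_diff_distrib[symmetric] abs_mult sum_subtractf by simp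
    also have "\<dots> \<le> (\<Sum>s\<in>UNIV. (1 / real T) * (\<Sum>t<T. \<bar>mu_t P \<pi> \<mu> t s - mu_t P' \<pi> \<mu> t s\<bar>))"
      by (intro sum_mono mult_left_mono sum_abs) auto
    also have "\<dots> = (1 / real T) * (\<Sum>t<T. \<Sum>s\<in>UNIV. \<bar>mu_t P \<pi> \<mu> t s - mu_t P' \<pi> \<mu> t s\<bar>)"
      by (simp only: sum_distrib_left[symmetric], subst sum.swap, rule refl)
    also have "\<dots> \<le> (1 / real T) * (\<Sum>t<T. real t * e)"
      using sim_step[OF assms(2-5) L1] by (intro mult_left_mono sum_mono) auto
    also have "\<dots> = (1 / real T) * (\<Sum>t<T. real t) * e" by (simp add: sum_distrib_right)
    also have "\<dots> \<le> (1 / real T) * (real T ^ 2 / 2) * e"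
      using sum_real_lt e by (intro mult_right_mono mult_left_mono) auto
    also have "\<dots> = real T * e / 2" using T by (simp add: power2_eq_square)
    finally show ?thesis .
  qed
  have eq: "(\<Sum>s\<in>UNIV. \<Sum>a\<in>UNIV. mu_bar T P \<pi> \<mu> s * \<pi> s a * f s a)
         - (\<Sum>s\<in>UNIV. \<Sum>a\<in>UNIV. mu_bar T P' \<pi> \<mu> s * \<pi> s a * f s a)
       = (\<Sum>s\<in>UNIV. (mu_bar T P \<pi> \<mu> s - mu_bar T P' \<pi> \<mu> s) * (\<Sum>a\<in>UNIV. \<pi> s a * f s a))"
    by (simp add: sum_subtractf[symmetric] sum_distrib_left algebra_simps)
  have "\<bar>(\<Sum>s\<in>UNIV. \<Sum>a\<in>UNIV. mu_bar T P \<pi> \<mu> s * \<pi> s a * f s a)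
         - (\<Sum>s\<in>UNIV. \<Sum>a\<in>UNIV. mu_bar T P' \<pi> \<mu> s * \<pi> s a * f s a)\<bar>
        \<le> (\<Sum>s\<in>UNIV. \<bar>mu_bar T P \<pi> \<mu> s - mu_bar T P' \<pi> \<mu> s\<bar> * B)"
    unfolding eq using inner by (intro order.trans[OF sum_abs] sum_mono) (simp add: abs_mult mult_left_mono)
  also have "\<dots> \<le> (real T * e / 2) * B" by (simp only: sum_distrib_right[symmetric]) (rule mult_right_mono[OF mb B])
  finally show ?thesis by (simp add: mult.commute)
qed

lemma val_bound:
  assumes T: "T \<ge> 1" and "is_distr \<mu>" "is_kernel P" "is_policy \<pi>"
    and f: "\<forall>s a. \<bar>f s a\<bar> \<le> B"
  shows "\<bar>\<Sum>s\<in>UNIV. \<Sum>a\<in>UNIV. mu_bar T P \<pi> \<mu> s * \<pi> s a * f s a\<bar> \<le> B"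
proof -
  have inner: "\<bar>\<Sum>a\<in>UNIV. \<pi> s a * f s a\<bar> \<le> B" for s
  proof -
    have "\<bar>\<Sum>a\<in>UNIV. \<pi> s a * f s a\<bar> \<le> (\<Sum>a\<in>UNIV. \<pi> s a * B)"
      using assms(4) f unfolding is_policy_def
      by (intro order.trans[OF sum_abs] sum_mono) (simp add: abs_mult mult_left_mono)
    also have "\<dots> = B" using assms(4) unfolding is_policy_def by (simp add: sum_distrib_right[symmetric])
    finally show ?thesis .
  qed
  have "\<bar>\<Sum>s\<in>UNIV. \<Sum>a\<in>UNIV. mu_bar T P \<pi> \<mu> s * \<pi> s a * f s a\<bar>
      = \<bar>\<Sum>s\<in>UNIV. mu_bar T P \<pi> \<mu> s * (\<Sum>a\<in>UNIV. \<pi> s a * f s a)\<bar>"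
    by (simp add: sum_distrib_left mult.assoc)
  also have "\<dots> \<le> (\<Sum>s\<in>UNIV. mu_bar T P \<pi> \<mu> s * B)"
    using inner mu_bar_nonneg[OF assms(2,3,4)]
    by (intro order.trans[OF sum_abs] sum_mono) (simp add: abs_mult mult_left_mono)
  also have "\<dots> = B" using mu_bar_sum[OF assms(1-4)] by (simp add: sum_distrib_right[symmetric])
  finally show ?thesis .
qed


lemma finite_valid: "finite {tr :: ('st::finite \<times> 'a::finite \<times> 'st) list. valid_traj T tr}"
proof -
  have "{tr :: ('st \<times> 'a \<times> 'st) list. valid_traj T tr} \<subseteq> {xs. set xs \<subseteq> UNIV \<and> length xs = T}"
    unfolding valid_traj_def by auto
  moreover have "finite {xs :: ('st \<times> 'a \<times> 'st) list. set xs \<subseteq> UNIV \<and> length xs = T}"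
    by (rule finite_lists_length_eq) simp
  ultimately show ?thesis by (rule finite_subset)
qed

lemma valid_traj_snoc:
  assumes "T \<ge> 1"
  shows "valid_traj (Suc T) (tr @ [x]) \<longleftrightarrow> valid_traj T tr \<and> fst x = snd (snd (last tr))"
proof
  assume v: "valid_traj (Suc T) (tr @ [x])"
  then have len: "length tr = T" unfolding valid_traj_def by simp
  then have ne: "tr \<noteq> []" using assms by auto
  have ch: "snd (snd ((tr @ [x]) ! i)) = fst ((tr @ [x]) ! Suc i)" if "Suc i < Suc T" for i
    using v that unfolding valid_traj_def by blast
  have "snd (snd (tr ! i)) = fst (tr ! Suc i)" if "Suc i < T" for i
    using ch[of i] that len by (simp add: nth_append)
  then have "valid_traj T tr" using len unfolding valid_traj_def by blast
  moreover have "fst x = snd (snd (last tr))"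
  proof -
    have "snd (snd ((tr @ [x]) ! (T - 1))) = fst ((tr @ [x]) ! Suc (T - 1))"
      using ch[of "T - 1"] assms by simp
    then show ?thesis using len assms ne by (simp add: nth_append last_conv_nth)
  qed
  ultimately show "valid_traj T tr \<and> fst x = snd (snd (last tr))" by blast
next
  assume a: "valid_traj T tr \<and> fst x = snd (snd (last tr))"
  then have len: "length tr = T" unfolding valid_traj_def by simp
  then have ne: "tr \<noteq> []" using assms by auto
  have "snd (snd ((tr @ [x]) ! i)) = fst ((tr @ [x]) ! Suc i)" if "Suc i < Suc T" for i
  proof (cases "Suc i < T")
    case True then show ?thesis using a len unfolding valid_traj_def by (simp add: nth_append)
  next
    case False
    then have "i = T - 1" using that by simp
    then show ?thesis using a len ne assms by (simp add: nth_append last_conv_nth)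
  qed
  then show "valid_traj (Suc T) (tr @ [x])" using len unfolding valid_traj_def by simp
qed

lemma valid_Suc_image:
  assumes "T \<ge> 1"
  shows "{tr. valid_traj (Suc T) tr} =
    (\<lambda>(tr, a, s'). tr @ [(snd (snd (last tr)), a, s')]) ` ({tr. valid_traj T tr} \<times> UNIV)"
proof (intro equalityI subsetI)
  fix tr' assume "tr' \<in> {tr. valid_traj (Suc T) tr}"
  then have v: "valid_traj (Suc T) tr'" by simp
  then have "tr' \<noteq> []" unfolding valid_traj_def by auto
  then obtain tr x where tx: "tr' = tr @ [x]" using rev_exhaust by blast
  obtain s a s' where x: "x = (s, a, s')" by (cases x) auto
  have "valid_traj (Suc T) (tr @ [x])" using v tx by simp
  then have "valid_traj T tr \<and> fst x = snd (snd (last tr))" using valid_traj_snoc[OF assms] by blast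
  then show "tr' \<in> (\<lambda>(tr, a, s'). tr @ [(snd (snd (last tr)), a, s')]) ` ({tr. valid_traj T tr} \<times> UNIV)"
    using tx x by (auto intro!: image_eqI[where x = "(tr, a, s')"])
next
  fix tr' assume "tr' \<in> (\<lambda>(tr, a, s'). tr @ [(snd (snd (last tr)), a, s')]) ` ({tr. valid_traj T tr} \<times> UNIV)"
  then obtain tr a s' where o: "tr' = tr @ [(snd (snd (last tr)), a, s')]" "valid_traj T tr" by auto
  have "valid_traj (Suc T) (tr @ [(snd (snd (last tr)), a, s')])"
    using valid_traj_snoc[OF assms, of tr "(snd (snd (last tr)), a, s')"] o(2) by simp
  then show "tr' \<in> {tr. valid_traj (Suc T) tr}" using o(1) by simp
qed

lemma sum_valid_Suc:
  fixes g :: "('st::finite \<times> 'a::finite \<times> 'st) list \<Rightarrow> real"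
  assumes "T \<ge> 1"
  shows "(\<Sum>tr\<in>{tr. valid_traj (Suc T) tr}. g tr) =
    (\<Sum>tr\<in>{tr. valid_traj T tr}. \<Sum>a\<in>UNIV. \<Sum>s'\<in>UNIV. g (tr @ [(snd (snd (last tr)), a, s')]))"
proof -
  have inj: "inj_on (\<lambda>(tr, a, s'). tr @ [(snd (snd (last tr)), a, s')]) ({tr. valid_traj T tr} \<times> (UNIV :: ('a \<times> 'st) set))"
    by (auto simp: inj_on_def)
  have "(\<Sum>tr\<in>{tr. valid_traj (Suc T) tr}. g tr) =
      (\<Sum>p\<in>{tr. valid_traj T tr} \<times> (UNIV :: ('a \<times> 'st) set). g (case p of (tr, a, s') \<Rightarrow> tr @ [(snd (snd (last tr)), a, s')]))"
    unfolding valid_Suc_image[OF assms] by (subst sum.reindex[OF inj]) (simp add: comp_def)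
  also have "\<dots> = (\<Sum>tr\<in>{tr. valid_traj T tr}. \<Sum>p\<in>(UNIV :: ('a \<times> 'st) set). g (tr @ [(snd (snd (last tr)), fst p, snd p)]))"
    by (simp add: sum.cartesian_product split_def)
  also have "\<dots> = (\<Sum>tr\<in>{tr. valid_traj T tr}. \<Sum>a\<in>UNIV. \<Sum>s'\<in>UNIV. g (tr @ [(snd (snd (last tr)), a, s')]))"
    by (simp add: sum.cartesian_product split_def)
  finally show ?thesis .
qed

lemma sum_valid_1:
  fixes g :: "('st::finite \<times> 'a::finite \<times> 'st) list \<Rightarrow> real"
  shows "(\<Sum>tr\<in>{tr. valid_traj (Suc 0) tr}. g tr) = (\<Sum>s\<in>UNIV. \<Sum>a\<in>UNIV. \<Sum>s'\<in>UNIV. g [(s, a, s')])"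
proof -
  have eq: "{tr. valid_traj (Suc 0) tr} = (\<lambda>x. [x]) ` UNIV"
    unfolding valid_traj_def by (auto simp: length_Suc_conv)
  have "(\<Sum>tr\<in>{tr. valid_traj (Suc 0) tr}. g tr) = (\<Sum>x\<in>UNIV. g [x])"
    unfolding eq by (subst sum.reindex) (auto simp: inj_on_def)
  also have "\<dots> = (\<Sum>s\<in>UNIV. \<Sum>a\<in>UNIV. \<Sum>s'\<in>UNIV. g [(s, a, s')])"
    by (simp add: sum.cartesian_product split_def)
  finally show ?thesis .
qed

lemma traj_prob_single: "traj_prob D P pi0 [(s, a, s')] = D s * (pi0 s a * P s a s')"
  unfolding traj_prob_def by simp

lemma traj_prob_snoc:
  assumes "tr \<noteq> []"
  shows "traj_prob D P pi0 (tr @ [(s, a, s')]) = traj_prob D P pi0 tr * (pi0 s a * P s a s')"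
proof -
  have "(\<Prod>i<length (tr @ [(s, a, s')]). (case (tr @ [(s, a, s')]) ! i of (s, a, s') \<Rightarrow> pi0 s a * P s a s'))
      = (\<Prod>i<length tr. (case tr ! i of (s, a, s') \<Rightarrow> pi0 s a * P s a s')) * (pi0 s a * P s a s')"
    by (simp add: nth_append)
  then show ?thesis using assms unfolding traj_prob_def by (simp add: mult.assoc)
qed


lemma swap_inner: "(\<Sum>x\<in>A. \<Sum>y\<in>B. \<Sum>z\<in>C. f x y z) = (\<Sum>x\<in>A. \<Sum>z\<in>C. \<Sum>y\<in>B. f x y z)"
  by (rule sum.cong[OF refl], rule sum.swap)

lemma sum_valid_1':
  fixes g :: "('st::finite \<times> 'a::finite \<times> 'st) list \<Rightarrow> real"
  shows "(\<Sum>tr\<in>{tr. valid_traj (Suc 0) tr}. g tr) = (\<Sum>x\<in>UNIV. g [x])"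
proof -
  have eq: "{tr. valid_traj (Suc 0) tr} = (\<lambda>x. [x]) ` UNIV"
    unfolding valid_traj_def by (auto simp: length_Suc_conv)
  show ?thesis
    unfolding eq by (subst sum.reindex) (auto simp: inj_on_def)
qed

lemma G_lemma:
  fixes m :: "'st::finite \<Rightarrow> real" and P :: "'st \<Rightarrow> 'a::finite \<Rightarrow> 'st \<Rightarrow> real"
  shows "(\<Sum>s'\<in>UNIV. (\<Sum>s\<in>UNIV. m s * Ppi P pi0 s s') * h s')
     = (\<Sum>s\<in>UNIV. m s * (\<Sum>a\<in>UNIV. \<Sum>s'\<in>UNIV. pi0 s a * P s a s' * h s'))"
proof -
  have "(\<Sum>s'\<in>UNIV. (\<Sum>s\<in>UNIV. m s * Ppi P pi0 s s') * h s')
      = (\<Sum>s'\<in>UNIV. \<Sum>s\<in>UNIV. \<Sum>a\<in>UNIV. m s * (pi0 s a * (P s a s' * h s')))"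
    by (simp add: Ppi_def sum_distrib_left sum_distrib_right mult.assoc)
  also have "\<dots> = (\<Sum>s\<in>UNIV. \<Sum>s'\<in>UNIV. \<Sum>a\<in>UNIV. m s * (pi0 s a * (P s a s' * h s')))"
    by (rule sum.swap)
  also have "\<dots> = (\<Sum>s\<in>UNIV. \<Sum>a\<in>UNIV. \<Sum>s'\<in>UNIV. m s * (pi0 s a * (P s a s' * h s')))"
    by (rule swap_inner)
  also have "\<dots> = (\<Sum>s\<in>UNIV. m s * (\<Sum>a\<in>UNIV. \<Sum>s'\<in>UNIV. pi0 s a * P s a s' * h s'))"
    by (simp add: sum_distrib_left mult.assoc)
  finally show ?thesis .
qed

lemma traj_prob_nonneg:
  assumes "is_distr D" "is_kernel P" "is_policy pi0"
  shows "traj_prob D P pi0 tr \<ge> 0"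
  using assms unfolding traj_prob_def is_distr_def is_kernel_def is_policy_def
  by (auto intro!: mult_nonneg_nonneg prod_nonneg split: prod.splits)

lemma cnt_sum: "length (filter (\<lambda>y. y = c) tr) = (\<Sum>t<length tr. if tr ! t = c then 1 else 0::nat)"
  by (induction tr) (simp_all del: sum.lessThan_Suc add: sum.lessThan_Suc_shift)

context
  fixes D :: "'st::finite \<Rightarrow> real" and P :: "'st \<Rightarrow> 'a::finite \<Rightarrow> 'st \<Rightarrow> real" and pi0 :: "'st \<Rightarrow> 'a \<Rightarrow> real"
  assumes D: "is_distr D" and P: "is_kernel P" and pi0: "is_policy pi0"
begin

lemma Psum: "sum (P s a) UNIV = 1" using P unfolding is_kernel_def by simp
lemma pisum: "sum (pi0 s) UNIV = 1" using pi0 unfolding is_policy_def by simp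

lemma row1: "(\<Sum>a\<in>UNIV. \<Sum>s'\<in>UNIV. pi0 s a * P s a s') = 1"
  using P pi0 unfolding is_kernel_def is_policy_def by (simp add: sum_distrib_left[symmetric])

lemma M1:
  "(\<Sum>tr\<in>{tr. valid_traj (Suc k) tr}. traj_prob D P pi0 tr * h (snd (snd (last tr))))
     = (\<Sum>s\<in>UNIV. mu_t P pi0 D (Suc k) s * h s)"
proof (induction k arbitrary: h)
  case 0
  have "(\<Sum>tr\<in>{tr. valid_traj (Suc 0) tr}. traj_prob D P pi0 tr * h (snd (snd (last tr))))
      = (\<Sum>s\<in>UNIV. \<Sum>a\<in>UNIV. \<Sum>s'\<in>UNIV. D s * (pi0 s a * P s a s') * h s')"
    by (simp add: sum_valid_1 traj_prob_single)
  also have "\<dots> = (\<Sum>s\<in>UNIV. D s * (\<Sum>a\<in>UNIV. \<Sum>s'\<in>UNIV. pi0 s a * P s a s' * h s'))"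
    by (simp add: sum_distrib_left mult.assoc)
  also have "\<dots> = (\<Sum>s'\<in>UNIV. (\<Sum>s\<in>UNIV. D s * Ppi P pi0 s s') * h s')"
    by (rule G_lemma[symmetric])
  finally show ?case by simp
next
  case (Suc k)
  define H where "H s = (\<Sum>a\<in>UNIV. \<Sum>s'\<in>UNIV. pi0 s a * P s a s' * h s')" for s
  have "(\<Sum>tr\<in>{tr. valid_traj (Suc (Suc k)) tr}. traj_prob D P pi0 tr * h (snd (snd (last tr))))
      = (\<Sum>tr\<in>{tr. valid_traj (Suc k) tr}. \<Sum>a\<in>UNIV. \<Sum>s'\<in>UNIV.
          traj_prob D P pi0 (tr @ [(snd (snd (last tr)), a, s')]) * h s')"
    by (subst sum_valid_Suc) simp_all
  also have "\<dots> = (\<Sum>tr\<in>{tr. valid_traj (Suc k) tr}. traj_prob D P pi0 tr * H (snd (snd (last tr))))"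
  proof (rule sum.cong[OF refl])
    fix tr :: "('st \<times> 'a \<times> 'st) list" assume "tr \<in> {tr. valid_traj (Suc k) tr}"
    then have "tr \<noteq> []" unfolding valid_traj_def by auto
    then show "(\<Sum>a\<in>UNIV. \<Sum>s'\<in>UNIV. traj_prob D P pi0 (tr @ [(snd (snd (last tr)), a, s')]) * h s')
       = traj_prob D P pi0 tr * H (snd (snd (last tr)))"
      by (simp add: traj_prob_snoc H_def sum_distrib_left mult.assoc)
  qed
  also have "\<dots> = (\<Sum>s\<in>UNIV. mu_t P pi0 D (Suc k) s * H s)" by (rule Suc.IH)
  also have "\<dots> = (\<Sum>s'\<in>UNIV. (\<Sum>s\<in>UNIV. mu_t P pi0 D (Suc k) s * Ppi P pi0 s s') * h s')"
    unfolding H_def by (rule G_lemma[symmetric])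
  finally show ?case by simp
qed

lemma traj_total: "T \<ge> 1 \<Longrightarrow> (\<Sum>tr\<in>{tr. valid_traj T tr}. traj_prob D P pi0 tr) = 1"
proof -
  assume "T \<ge> 1"
  then obtain k where k: "T = Suc k" by (cases T) auto
  have "(\<Sum>tr\<in>{tr. valid_traj T tr}. traj_prob D P pi0 tr) = (\<Sum>s\<in>UNIV. mu_t P pi0 D (Suc k) s * 1)"
    using M1[where k=k and h="\<lambda>_. 1"] k by simp
  also have "\<dots> = 1" by (simp only: mult_1_right mu_t_sum[OF D P pi0])
  finally show ?thesis .
qed

lemma delta2: "(\<Sum>a\<in>UNIV. \<Sum>s'\<in>UNIV. if (l, a, s') = (s0 :: 'st, a0 :: 'a, s1 :: 'st) then f a s' else (0::real))
   = (if l = s0 then f a0 s1 else 0)"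
proof -
  have "(\<Sum>a\<in>UNIV. \<Sum>s'\<in>UNIV. if (l, a, s') = (s0, a0, s1) then f a s' else (0::real))
    = (\<Sum>a\<in>UNIV. \<Sum>s'\<in>UNIV. if s' = s1 then (if a = a0 then (if l = s0 then f a s' else 0) else 0) else 0)"
    by (intro sum.cong refl) auto
  also have "\<dots> = (if l = s0 then f a0 s1 else 0)" by simp
  finally show ?thesis .
qed

lemma M2:
  "t \<le> k \<Longrightarrow> (\<Sum>tr\<in>{tr. valid_traj (Suc k) tr}. if tr ! t = (s0, a0, s1) then traj_prob D P pi0 tr else 0)
     = mu_t P pi0 D t s0 * pi0 s0 a0 * P s0 a0 s1"
proof (induction k arbitrary: t)
  case 0
  then have t: "t = 0" by simp
  have "(\<Sum>tr\<in>{tr. valid_traj (Suc 0) tr}. if tr ! t = (s0, a0, s1) then traj_prob D P pi0 tr else 0)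
      = (\<Sum>x\<in>UNIV. if x = (s0, a0, s1) then traj_prob D P pi0 [x] else 0)"
    by (simp add: sum_valid_1' t)
  also have "\<dots> = traj_prob D P pi0 [(s0, a0, s1)]" by simp
  finally show ?case using t by (simp add: traj_prob_single mult.assoc)
next
  case (Suc k)
  have "(\<Sum>tr\<in>{tr. valid_traj (Suc (Suc k)) tr}. if tr ! t = (s0, a0, s1) then traj_prob D P pi0 tr else 0)
      = (\<Sum>tr\<in>{tr. valid_traj (Suc k) tr}. \<Sum>a\<in>UNIV. \<Sum>s'\<in>UNIV.
          if (tr @ [(snd (snd (last tr)), a, s')]) ! t = (s0, a0, s1)
          then traj_prob D P pi0 tr * (pi0 (snd (snd (last tr))) a * P (snd (snd (last tr))) a s') else 0)"
    apply (subst sum_valid_Suc, simp)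
    apply (rule sum.cong[OF refl])+
    apply (simp add: traj_prob_snoc valid_traj_def)
    apply (subgoal_tac "x \<noteq> []")
     apply (simp add: traj_prob_snoc)
    apply auto
    done
  also have "\<dots> = mu_t P pi0 D t s0 * pi0 s0 a0 * P s0 a0 s1"
  proof (cases "t \<le> k")
    case True
    have "(\<Sum>tr\<in>{tr. valid_traj (Suc k) tr}. \<Sum>a\<in>UNIV. \<Sum>s'\<in>UNIV.
          if (tr @ [(snd (snd (last tr)), a, s')]) ! t = (s0, a0, s1)
          then traj_prob D P pi0 tr * (pi0 (snd (snd (last tr))) a * P (snd (snd (last tr))) a s') else 0)
       = (\<Sum>tr\<in>{tr. valid_traj (Suc k) tr}. if tr ! t = (s0, a0, s1) then traj_prob D P pi0 tr else 0)"
    proof (rule sum.cong[OF refl])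
      fix tr :: "('st \<times> 'a \<times> 'st) list" assume "tr \<in> {tr. valid_traj (Suc k) tr}"
      then have len: "length tr = Suc k" unfolding valid_traj_def by auto
      have nth: "(tr @ [y]) ! t = tr ! t" for y using len True by (simp add: nth_append)
      show "(\<Sum>a\<in>UNIV. \<Sum>s'\<in>UNIV.
          if (tr @ [(snd (snd (last tr)), a, s')]) ! t = (s0, a0, s1)
          then traj_prob D P pi0 tr * (pi0 (snd (snd (last tr))) a * P (snd (snd (last tr))) a s') else 0)
          = (if tr ! t = (s0, a0, s1) then traj_prob D P pi0 tr else 0)"
        unfolding nth by (simp add: sum_distrib_left[symmetric] Psum pisum)
    qed
    also have "\<dots> = mu_t P pi0 D t s0 * pi0 s0 a0 * P s0 a0 s1" by (rule Suc.IH[OF True])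
    finally show ?thesis .
  next
    case False
    then have t: "t = Suc k" using Suc.prems by simp
    define hh where "hh s = (if s = s0 then pi0 s0 a0 * P s0 a0 s1 else 0)" for s
    have "(\<Sum>tr\<in>{tr. valid_traj (Suc k) tr}. \<Sum>a\<in>UNIV. \<Sum>s'\<in>UNIV.
          if (tr @ [(snd (snd (last tr)), a, s')]) ! t = (s0, a0, s1)
          then traj_prob D P pi0 tr * (pi0 (snd (snd (last tr))) a * P (snd (snd (last tr))) a s') else 0)
       = (\<Sum>tr\<in>{tr. valid_traj (Suc k) tr}. traj_prob D P pi0 tr * hh (snd (snd (last tr))))"
    proof (rule sum.cong[OF refl])
      fix tr :: "('st \<times> 'a \<times> 'st) list" assume "tr \<in> {tr. valid_traj (Suc k) tr}"
      then have len: "length tr = Suc k" unfolding valid_traj_def by auto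
      have nth: "(tr @ [y]) ! t = y" for y using len t by (simp add: nth_append)
      show "(\<Sum>a\<in>UNIV. \<Sum>s'\<in>UNIV.
          if (tr @ [(snd (snd (last tr)), a, s')]) ! t = (s0, a0, s1)
          then traj_prob D P pi0 tr * (pi0 (snd (snd (last tr))) a * P (snd (snd (last tr))) a s') else 0)
          = traj_prob D P pi0 tr * hh (snd (snd (last tr)))"
        unfolding nth delta2 hh_def by simp
    qed
    also have "\<dots> = (\<Sum>s\<in>UNIV. mu_t P pi0 D (Suc k) s * hh s)" by (rule M1)
    also have "\<dots> = mu_t P pi0 D t s0 * pi0 s0 a0 * P s0 a0 s1"
      unfolding hh_def t by (simp add: if_distrib mult.assoc cong: if_cong)
    finally show ?thesis .
  qed
  finally show ?case .
qed

lemma exp_count: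
  assumes "T \<ge> 1"
  shows "(\<Sum>tr\<in>{tr. valid_traj T tr}. traj_prob D P pi0 tr * real (length (filter (\<lambda>y. y = (s0, a0, s1)) tr)))
     = real T * Lam T P D pi0 s0 a0 * P s0 a0 s1"
proof -
  obtain k where k: "T = Suc k" using assms by (cases T) auto
  have "(\<Sum>tr\<in>{tr. valid_traj T tr}. traj_prob D P pi0 tr * real (length (filter (\<lambda>y. y = (s0, a0, s1)) tr)))
      = (\<Sum>tr\<in>{tr. valid_traj T tr}. \<Sum>t<Suc k. if tr ! t = (s0, a0, s1) then traj_prob D P pi0 tr else 0)"
  proof (rule sum.cong[OF refl])
    fix tr :: "('st \<times> 'a \<times> 'st) list" assume "tr \<in> {tr. valid_traj T tr}"
    then have len: "length tr = Suc k" using k unfolding valid_traj_def by auto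
    show "traj_prob D P pi0 tr * real (length (filter (\<lambda>y. y = (s0, a0, s1)) tr))
        = (\<Sum>t<Suc k. if tr ! t = (s0, a0, s1) then traj_prob D P pi0 tr else 0)"
      unfolding cnt_sum len of_nat_sum sum_distrib_left by (rule sum.cong) auto
  qed
  also have "\<dots> = (\<Sum>t<Suc k. \<Sum>tr\<in>{tr. valid_traj T tr}. if tr ! t = (s0, a0, s1) then traj_prob D P pi0 tr else 0)"
    by (rule sum.swap)
  also have "\<dots> = (\<Sum>t<Suc k. mu_t P pi0 D t s0 * pi0 s0 a0 * P s0 a0 s1)"
    unfolding k by (intro sum.cong refl M2) simp
  also have "\<dots> = real T * Lam T P D pi0 s0 a0 * P s0 a0 s1"
    unfolding Lam_def mu_bar_def k by (simp add: sum_distrib_right del: sum.lessThan_Suc)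
  finally show ?thesis .
qed

end

lemma lists_Suc_image:
  "{ds. length ds = Suc N \<and> (\<forall>x\<in>set ds. Q x)} =
   (\<lambda>(x, xs). x # xs) ` ({x. Q x} \<times> {ds. length ds = N \<and> (\<forall>x\<in>set ds. Q x)})"
  by (auto simp: length_Suc_conv image_iff)

lemma finite_lists_Q: "finite {x. Q x} \<Longrightarrow> finite {ds. length ds = N \<and> (\<forall>x\<in>set ds. Q x)}"
proof -
  assume f: "finite {x. Q x}"
  have "{ds. length ds = N \<and> (\<forall>x\<in>set ds. Q x)} = {xs. set xs \<subseteq> {x. Q x} \<and> length xs = N}" by auto
  then show ?thesis using finite_lists_length_eq[OF f] by simp
qed

lemma sum_lists_prod:
  fixes g :: "'x \<Rightarrow> real"
  assumes f: "finite {x. Q x}"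
  shows "(\<Sum>ds\<in>{ds. length ds = N \<and> (\<forall>x\<in>set ds. Q x)}. prod_list (map g ds)) = (\<Sum>x\<in>{x. Q x}. g x) ^ N"
proof (induction N)
  case 0
  have "{ds. length ds = 0 \<and> (\<forall>x\<in>set ds. Q x)} = {[]}" by auto
  then show ?case by simp
next
  case (Suc N)
  have inj: "inj_on (\<lambda>(x, xs). x # xs) ({x. Q x} \<times> {ds. length ds = N \<and> (\<forall>x\<in>set ds. Q x)})"
    by (auto simp: inj_on_def)
  have "(\<Sum>ds\<in>{ds. length ds = Suc N \<and> (\<forall>x\<in>set ds. Q x)}. prod_list (map g ds))
      = (\<Sum>p\<in>{x. Q x} \<times> {ds. length ds = N \<and> (\<forall>x\<in>set ds. Q x)}. g (fst p) * prod_list (map g (snd p)))"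
    unfolding lists_Suc_image by (subst sum.reindex[OF inj]) (simp add: split_def)
  also have "\<dots> = (\<Sum>x\<in>{x. Q x}. \<Sum>ds\<in>{ds. length ds = N \<and> (\<forall>x\<in>set ds. Q x)}. g x * prod_list (map g ds))"
    by (simp add: sum.cartesian_product split_def)
  also have "\<dots> = (\<Sum>x\<in>{x. Q x}. g x) * (\<Sum>ds\<in>{ds. length ds = N \<and> (\<forall>x\<in>set ds. Q x)}. prod_list (map g ds))"
    by (simp add: sum_product)
  finally show ?case using Suc by simp
qed

lemma finite_datasets: "finite (datasets T N :: ('st::finite \<times> 'a::finite \<times> 'st) list list set)"
  unfolding datasets_def using finite_lists_Q[OF finite_valid] by simp

lemma data_prob_if: "data_prob T N D P pi0 E
   = (\<Sum>ds\<in>datasets T N. if E ds then prod_list (map (traj_prob D P pi0) ds) else 0)"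
  for D :: "'st::finite \<Rightarrow> real" and P :: "'st \<Rightarrow> 'a::finite \<Rightarrow> 'st \<Rightarrow> real"
  unfolding data_prob_def by (rule sum.inter_filter[OF finite_datasets])

lemma prod_list_exp: "prod_list (map g ds) * exp (l * sum_list (map Y ds))
   = prod_list (map (\<lambda>tr. g tr * exp (l * Y tr)) ds)"
  for g :: "'x \<Rightarrow> real"
  by (induction ds) (simp_all add: distrib_left exp_add algebra_simps)

context
  fixes D :: "'st::finite \<Rightarrow> real" and P :: "'st \<Rightarrow> 'a::finite \<Rightarrow> 'st \<Rightarrow> real" and pi0 :: "'st \<Rightarrow> 'a \<Rightarrow> real"
  assumes D: "is_distr D" and P: "is_kernel P" and pi0: "is_policy pi0"
begin

lemma w_nonneg: "prod_list (map (traj_prob D P pi0) ds) \<ge> 0"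
  by (induction ds) (simp_all add: traj_prob_nonneg[OF D P pi0])

lemma data_total: "T \<ge> 1 \<Longrightarrow> data_prob T N D P pi0 (\<lambda>_. True) = 1"
proof -
  assume T: "T \<ge> 1"
  have "(\<Sum>ds\<in>{ds. length ds = N \<and> (\<forall>x\<in>set ds. valid_traj T x)}. prod_list (map (traj_prob D P pi0) ds))
     = (\<Sum>x\<in>{x. valid_traj T x}. traj_prob D P pi0 x) ^ N"
    by (rule sum_lists_prod[OF finite_valid])
  then show ?thesis unfolding data_prob_def datasets_def using traj_total[OF D P pi0 T] by simp
qed

lemma data_nonneg: "data_prob T N D P pi0 E \<ge> 0"
  unfolding data_prob_def by (rule sum_nonneg) (rule w_nonneg)

lemma data_compl: "T \<ge> 1 \<Longrightarrow> data_prob T N D P pi0 E = 1 - data_prob T N D P pi0 (\<lambda>ds. \<not> E ds)"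
proof -
  assume T: "T \<ge> 1"
  have "data_prob T N D P pi0 E + data_prob T N D P pi0 (\<lambda>ds. \<not> E ds) = data_prob T N D P pi0 (\<lambda>_. True)"
    unfolding data_prob_if by (simp add: sum.distrib[symmetric] if_distrib cong: if_cong) (rule sum.cong; simp)
  then show ?thesis using data_total[OF T] by simp
qed

lemma data_mono: "(\<And>ds. ds \<in> datasets T N \<Longrightarrow> E ds \<Longrightarrow> F ds) \<Longrightarrow>
    data_prob T N D P pi0 E \<le> data_prob T N D P pi0 F"
  unfolding data_prob_if by (intro sum_mono) (auto simp: w_nonneg)

lemma data_union:
  assumes I: "finite I"
  shows "data_prob T N D P pi0 (\<lambda>ds. \<exists>i\<in>I. B i ds) \<le> (\<Sum>i\<in>I. data_prob T N D P pi0 (B i))"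
proof -
  have "data_prob T N D P pi0 (\<lambda>ds. \<exists>i\<in>I. B i ds)
      \<le> (\<Sum>ds\<in>datasets T N. \<Sum>i\<in>I. if B i ds then prod_list (map (traj_prob D P pi0) ds) else 0)"
    unfolding data_prob_if
  proof (rule sum_mono)
    fix ds
    show "(if \<exists>i\<in>I. B i ds then prod_list (map (traj_prob D P pi0) ds) else 0)
        \<le> (\<Sum>i\<in>I. if B i ds then prod_list (map (traj_prob D P pi0) ds) else 0)"
    proof (cases "\<exists>i\<in>I. B i ds")
      case True
      then obtain i where i: "i \<in> I" "B i ds" by blast
      have "(if B i ds then prod_list (map (traj_prob D P pi0) ds) else 0)
          \<le> (\<Sum>i\<in>I. if B i ds then prod_list (map (traj_prob D P pi0) ds) else 0)"
        by (rule member_le_sum[OF i(1) _ I]) (simp add: w_nonneg)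
      then show ?thesis using True i by simp
    next
      case False
      then show ?thesis by (simp add: sum_nonneg w_nonneg)
    qed
  qed
  also have "\<dots> = (\<Sum>i\<in>I. data_prob T N D P pi0 (B i))"
    unfolding data_prob_if by (rule sum.swap)
  finally show ?thesis .
qed

lemma chernoff:
  assumes l: "l \<ge> 0"
  shows "data_prob T N D P pi0 (\<lambda>ds. c \<le> sum_list (map Y ds))
     \<le> exp (- l * c) * (\<Sum>tr\<in>{tr. valid_traj T tr}. traj_prob D P pi0 tr * exp (l * Y tr)) ^ N"
proof -
  have "data_prob T N D P pi0 (\<lambda>ds. c \<le> sum_list (map Y ds))
      \<le> (\<Sum>ds\<in>datasets T N. exp (- l * c) * prod_list (map (\<lambda>tr. traj_prob D P pi0 tr * exp (l * Y tr)) ds))"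
    unfolding data_prob_if
  proof (rule sum_mono)
    fix ds :: "('st \<times> 'a \<times> 'st) list list"
    have w: "prod_list (map (traj_prob D P pi0) ds) \<ge> 0" by (rule w_nonneg)
    have "(if c \<le> sum_list (map Y ds) then prod_list (map (traj_prob D P pi0) ds) else 0)
        \<le> prod_list (map (traj_prob D P pi0) ds) * exp (l * (sum_list (map Y ds) - c))"
    proof (cases "c \<le> sum_list (map Y ds)")
      case True
      then have "exp (l * (sum_list (map Y ds) - c)) \<ge> 1" using l by simp
      then have "prod_list (map (traj_prob D P pi0) ds) * 1 \<le> prod_list (map (traj_prob D P pi0) ds) * exp (l * (sum_list (map Y ds) - c))"
        by (rule mult_left_mono) (rule w)
      then show ?thesis using True by simp
    next
      case False then show ?thesis using w by simp
    qed
    also have "\<dots> = exp (- l * c) * (prod_list (map (traj_prob D P pi0) ds) * exp (l * sum_list (map Y ds)))"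
      by (simp add: right_diff_distrib exp_diff exp_minus field_simps)
    also have "\<dots> = exp (- l * c) * prod_list (map (\<lambda>tr. traj_prob D P pi0 tr * exp (l * Y tr)) ds)"
      by (simp add: prod_list_exp)
    finally show "(if c \<le> sum_list (map Y ds) then prod_list (map (traj_prob D P pi0) ds) else 0)
        \<le> exp (- l * c) * prod_list (map (\<lambda>tr. traj_prob D P pi0 tr * exp (l * Y tr)) ds)" .
  qed
  also have "\<dots> = exp (- l * c) * (\<Sum>tr\<in>{tr. valid_traj T tr}. traj_prob D P pi0 tr * exp (l * Y tr)) ^ N"
    unfolding datasets_def
    by (simp add: sum_distrib_left[symmetric] sum_lists_prod[OF finite_valid])
  finally show ?thesis .
qed

end

lemma hoeff_fin:
  fixes w f :: "'x \<Rightarrow> real"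
  assumes A: "finite A" and w0: "\<forall>x\<in>A. w x \<ge> 0" and w1: "(\<Sum>x\<in>A. w x) = 1"
    and fab: "\<forall>x\<in>A. a \<le> f x \<and> f x \<le> b" and a: "a \<le> 0" and b: "0 \<le> b" and ab: "a < b"
    and mean: "(\<Sum>x\<in>A. w x * f x) = 0" and l: "l > 0"
  shows "(\<Sum>x\<in>A. w x * exp (l * f x)) \<le> exp (l\<^sup>2 * (b - a)\<^sup>2 / 8)"
proof -
  have pt: "exp (l * f x) \<le> (b - f x) / (b - a) * exp (l * a) + (f x - a) / (b - a) * exp (l * b)" if x: "x \<in> A" for x
  proof -
    define y where "y = (b - f x) / (b - a)"
    have y: "y \<in> {0..1}" using fab x ab by (auto simp: y_def)
    have "exp (l * ((1 - y) *\<^sub>R b + y *\<^sub>R a)) \<le> (1 - y) * exp (l * b) + y * exp (l * a)"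
      using y l by (intro convex_onD[OF convex_on_exp]) auto
    also have "(1 - y) *\<^sub>R b + y *\<^sub>R a = f x"
      using ab by (simp add: y_def divide_simps) (simp add: algebra_simps)?
    also have "1 - y = (f x - a) / (b - a)"
      using ab by (simp add: field_simps y_def)
    finally show ?thesis by (simp add: y_def)
  qed
  have "(\<Sum>x\<in>A. w x * exp (l * f x))
      \<le> (\<Sum>x\<in>A. w x * ((b - f x) / (b - a) * exp (l * a) + (f x - a) / (b - a) * exp (l * b)))"
    using pt w0 by (intro sum_mono mult_left_mono) auto
  also have "\<dots> = (\<Sum>x\<in>A. (b * w x - w x * f x) / (b - a) * exp (l * a) + (w x * f x - a * w x) / (b - a) * exp (l * b))"
    using ab by (intro sum.cong refl) (simp add: field_simps)
  also have "\<dots> = (\<Sum>x\<in>A. b * w x - w x * f x) / (b - a) * exp (l * a) + (\<Sum>x\<in>A. w x * f x - a * w x) / (b - a) * exp (l * b)"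
    by (simp add: sum.distrib sum_distrib_right[symmetric] sum_divide_distrib[symmetric])
  also have "(\<Sum>x\<in>A. b * w x - w x * f x) = b"
    using w1 mean by (simp add: sum_subtractf sum_distrib_left[symmetric])
  also have "(\<Sum>x\<in>A. w x * f x - a * w x) = - a"
    using w1 mean by (simp add: sum_subtractf sum_distrib_left[symmetric])
  also have "b / (b - a) * exp (l * a) + - a / (b - a) * exp (l * b) = (b * exp (l * a) - a * exp (l * b)) / (b - a)"
    by (simp add: diff_divide_distrib)
  finally have S: "(\<Sum>x\<in>A. w x * exp (l * f x)) \<le> (b * exp (l * a) - a * exp (l * b)) / (b - a)" .
  define p where "p = -a / (b - a)"
  define z where "z = l * (b - a)"
  define L where "L = (\<lambda>t. -t * p + ln (1 - p + p * exp t))"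
  have z: "z > 0" unfolding z_def using ab l by auto
  have p: "p \<ge> 0" unfolding p_def using a ab by (intro divide_nonneg_pos) auto
  have pos: "1 - p + p * exp z > 0"
  proof -
    have "exp z \<ge> 1" using z by simp
    hence "(exp z - 1) * p \<ge> 0" using p by simp
    thus ?thesis by (simp add: algebra_simps)
  qed
  have "exp (L z) * (b - a) = exp (-z * p) * (1 - p + p * exp z) * (b - a)"
    using pos by (simp add: exp_add L_def exp_diff exp_minus divide_simps)
  also have "\<dots> = b * exp (l * a) - a * exp (l * b)" using ab
    by (simp add: p_def z_def divide_simps) (simp add: exp_diff algebra_simps)?
  finally have eq0: "exp (L z) * (b - a) = b * exp (l * a) - a * exp (l * b)" .
  have eq: "(b * exp (l * a) - a * exp (l * b)) / (b - a) = exp (L z)"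
    unfolding eq0[symmetric] using ab by simp
  have "L z = -z * p + ln (1 + p * (exp z - 1))" by (simp add: L_def algebra_simps)
  also have "\<dots> \<le> z\<^sup>2 / 8" by (rule Hoeffdings_lemma_aux) (use z p in simp_all)
  finally have "exp (L z) \<le> exp (z\<^sup>2 / 8)" by simp
  moreover have "z\<^sup>2 / 8 = l\<^sup>2 * (b - a)\<^sup>2 / 8" by (simp add: z_def power_mult_distrib)
  ultimately have "exp (L z) \<le> exp (l\<^sup>2 * (b - a)\<^sup>2 / 8)" by (simp only:)
  then show ?thesis using S eq by (simp only:)
qed

lemma sum_list_shift: "sum_list (map (\<lambda>tr. X tr - m) ds) = sum_list (map X ds) - real (length ds) * m"
  for X :: "'x \<Rightarrow> real"
  by (induction ds) (simp_all add: algebra_simps)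

context
  fixes D :: "'st::finite \<Rightarrow> real" and P :: "'st \<Rightarrow> 'a::finite \<Rightarrow> 'st \<Rightarrow> real" and pi0 :: "'st \<Rightarrow> 'a \<Rightarrow> real"
  assumes D: "is_distr D" and P: "is_kernel P" and pi0: "is_policy pi0"
begin

lemma tail_gen:
  assumes T: "T \<ge> 1" and u: "u > 0"
    and Yab: "\<forall>tr\<in>{tr. valid_traj T tr}. a \<le> Y tr \<and> Y tr \<le> b" and a: "a \<le> 0" and b: "0 \<le> b"
    and ba: "b - a = real T"
    and mean: "(\<Sum>tr\<in>{tr. valid_traj T tr}. traj_prob D P pi0 tr * Y tr) = 0"
  shows "data_prob T N D P pi0 (\<lambda>ds. real N * u \<le> sum_list (map Y ds)) \<le> exp (- 2 * real N * u\<^sup>2 / (real T)\<^sup>2)"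
proof -
  define l where "l = 4 * u / (real T)\<^sup>2"
  have l: "l > 0" unfolding l_def using u T by simp
  have H: "(\<Sum>tr\<in>{tr. valid_traj T tr}. traj_prob D P pi0 tr * exp (l * Y tr)) \<le> exp (l\<^sup>2 * (b - a)\<^sup>2 / 8)"
    by (rule hoeff_fin[OF finite_valid _ traj_total[OF D P pi0 T] Yab a b _ mean l])
       (use ba T traj_prob_nonneg[OF D P pi0] in auto)
  have "data_prob T N D P pi0 (\<lambda>ds. real N * u \<le> sum_list (map Y ds))
      \<le> exp (- l * (real N * u)) * (\<Sum>tr\<in>{tr. valid_traj T tr}. traj_prob D P pi0 tr * exp (l * Y tr)) ^ N"
    using chernoff[OF D P pi0] l by simp
  also have "\<dots> \<le> exp (- l * (real N * u)) * exp (l\<^sup>2 * (b - a)\<^sup>2 / 8) ^ N"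
    using H traj_prob_nonneg[OF D P pi0]
    by (intro mult_left_mono power_mono sum_nonneg) auto
  also have "\<dots> = exp (- l * (real N * u) + real N * (l\<^sup>2 * (b - a)\<^sup>2 / 8))"
    by (simp only: exp_of_nat_mult[symmetric] exp_add[symmetric])
  also have "- l * (real N * u) + real N * (l\<^sup>2 * (b - a)\<^sup>2 / 8) = - 2 * real N * u\<^sup>2 / (real T)\<^sup>2"
    unfolding ba l_def using T by (simp add: field_simps power2_eq_square)
  finally show ?thesis .
qed

end

lemma count_sas_sum: "real (count_sas ds s a s') = sum_list (map (\<lambda>tr. real (length (filter (\<lambda>y. y = (s, a, s')) tr))) ds)"
  unfolding count_sas_def by (induction ds) simp_all

lemma sum_ind: "(\<Sum>s'\<in>(UNIV::'st::finite set). if s' = c \<and> R then 1 else (0::nat)) = (if R then 1 else 0)"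
  by (cases R) auto

lemma count_aux: "length (filter (\<lambda>x. fst x = s \<and> fst (snd x) = a) L)
   = (\<Sum>s'\<in>(UNIV :: 'st::finite set). length (filter (\<lambda>x. x = (s, a, s')) L))"
proof (induction L)
  case Nil then show ?case by simp
next
  case (Cons y L)
  let ?Q = "fst y = s \<and> fst (snd y) = a"
  have "(\<Sum>s'\<in>(UNIV :: 'st set). length (filter (\<lambda>x. x = (s, a, s')) (y # L)))
      = (\<Sum>s'\<in>UNIV. (if s' = snd (snd y) \<and> ?Q then 1 else 0) + length (filter (\<lambda>x. x = (s, a, s')) L))"
    by (intro sum.cong refl) (auto simp: prod_eq_iff)
  also have "\<dots> = (\<Sum>s'\<in>(UNIV :: 'st set). if s' = snd (snd y) \<and> ?Q then 1 else 0) + length (filter (\<lambda>x. fst x = s \<and> fst (snd x) = a) L)"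
    by (simp only: sum.distrib Cons)
  also have "(\<Sum>s'\<in>(UNIV :: 'st set). if s' = snd (snd y) \<and> ?Q then 1 else 0) = (if ?Q then 1 else (0::nat))"
    using sum_ind[where c="snd (snd y)" and R="fst y = s \<and> fst (snd y) = a"] by blast
  finally show ?case by simp
qed

lemma count_sa_sum: "count_sa ds s a = (\<Sum>s'\<in>(UNIV :: 'st::finite set). count_sas ds s a s')"
  unfolding count_sa_def count_sas_def by (rule count_aux)

lemma P_hat_kernel:
  fixes Q :: "'st::finite \<Rightarrow> 'a::finite \<Rightarrow> 'st \<Rightarrow> real"
  assumes Q: "is_kernel Q"
  shows "is_kernel (P_hat Q ds)"
  unfolding is_kernel_def
proof (intro conjI allI)
  fix s a s'
  show "P_hat Q ds s a s' \<ge> 0" using Q unfolding P_hat_def is_kernel_def by auto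
next
  fix s a
  show "(\<Sum>s'\<in>UNIV. P_hat Q ds s a s') = 1"
  proof (cases "count_sa ds s a = 0")
    case True then show ?thesis using Q unfolding P_hat_def is_kernel_def by simp
  next
    case False
    have "(\<Sum>s'\<in>UNIV. P_hat Q ds s a s') = (\<Sum>s'\<in>UNIV. real (count_sas ds s a s')) / real (count_sa ds s a)"
      unfolding P_hat_def using False by (simp add: sum_divide_distrib)
    also have "\<dots> = 1" using False by (simp only: of_nat_sum[symmetric] count_sa_sum[symmetric]) simp
    finally show ?thesis .
  qed
qed

lemma D_grp_distr:
  fixes D :: "grp \<times> 's::finite \<Rightarrow> real"
  assumes D: "is_distr D" and p: "p_grp D z > 0"
  shows "is_distr (D_grp D z)"
  unfolding is_distr_def
proof (intro conjI allI)
  fix x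
  have "D x \<ge> 0" using D unfolding is_distr_def by blast
  then show "D_grp D z x \<ge> 0" using p unfolding D_grp_def by simp
next
  have "(\<Sum>x\<in>UNIV. D_grp D z x) = (\<Sum>g\<in>UNIV. \<Sum>s\<in>UNIV. D_grp D z (g, s))"
    by (simp add: sum.cartesian_product split_def)
  also have "\<dots> = (\<Sum>s\<in>UNIV. D (z, s) / p_grp D z)"
  proof -
    have "(\<Sum>s\<in>UNIV. D_grp D z (g, s)) = (if g = z then (\<Sum>s\<in>UNIV. D (z, s) / p_grp D z) else 0)" for g
      unfolding D_grp_def by simp
    then show ?thesis by simp
  qed
  also have "\<dots> = 1" using p unfolding p_grp_def by (simp add: sum_divide_distrib[symmetric])
  finally show "(\<Sum>x\<in>UNIV. D_grp D z x) = 1" .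
qed

lemma l1_lemma:
  fixes C p :: "'x::finite \<Rightarrow> real"
  assumes dev: "\<forall>x. \<bar>C x - n * p x\<bar> < M" and p0: "\<forall>x. p x \<ge> 0" and p1: "(\<Sum>x\<in>UNIV. p x) = 1"
    and small: "real (card (UNIV :: 'x set)) * M \<le> n / 4" and n: "n > 0"
  shows "(\<Sum>x\<in>UNIV. C x) \<ge> 3 * n / 4"
    and "(\<Sum>x\<in>UNIV. \<bar>p x - C x / (\<Sum>y\<in>UNIV. C y)\<bar>) \<le> 8 * real (card (UNIV :: 'x set)) * M / (3 * n)"
proof -
  define K where "K = real (card (UNIV :: 'x set))"
  have sd: "\<bar>(\<Sum>x\<in>UNIV. C x) - n\<bar> \<le> K * M"
  proof -
    have "(\<Sum>x\<in>UNIV. C x) - n = (\<Sum>x\<in>UNIV. C x - n * p x)"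
      using p1 by (simp add: sum_subtractf sum_distrib_left[symmetric])
    then have "\<bar>(\<Sum>x\<in>UNIV. C x) - n\<bar> \<le> (\<Sum>x\<in>UNIV. \<bar>C x - n * p x\<bar>)" by (simp add: sum_abs)
    also have "\<dots> \<le> (\<Sum>x\<in>(UNIV :: 'x set). M)" using dev by (intro sum_mono) (simp add: less_imp_le)
    also have "\<dots> = K * M" unfolding K_def by simp
    finally show ?thesis .
  qed
  show C34: "(\<Sum>x\<in>UNIV. C x) \<ge> 3 * n / 4" using sd small unfolding K_def by linarith
  define CS where "CS = (\<Sum>y\<in>UNIV. C y)"
  have CS: "CS > 0" using C34 n unfolding CS_def by linarith
  have "(\<Sum>x\<in>UNIV. \<bar>p x - C x / CS\<bar>) = (\<Sum>x\<in>UNIV. \<bar>CS * p x - C x\<bar>) / CS"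
  proof -
    have "\<bar>p x - C x / CS\<bar> = \<bar>CS * p x - C x\<bar> / CS" for x
    proof -
      have "p x - C x / CS = (CS * p x - C x) / CS" using CS by (simp add: field_simps)
      then show ?thesis using CS by simp
    qed
    then show ?thesis by (simp add: sum_divide_distrib)
  qed
  also have "\<dots> \<le> (K * M + K * M) / CS"
  proof (rule divide_right_mono)
    have "(\<Sum>x\<in>UNIV. \<bar>CS * p x - C x\<bar>) \<le> (\<Sum>x\<in>UNIV. \<bar>C x - n * p x\<bar> + \<bar>CS - n\<bar> * p x)"
    proof (rule sum_mono)
      fix x
      have "CS * p x - C x = - (C x - n * p x) + (CS - n) * p x" by (simp add: algebra_simps)
      then have "\<bar>CS * p x - C x\<bar> \<le> \<bar>C x - n * p x\<bar> + \<bar>(CS - n) * p x\<bar>" by simp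
      then show "\<bar>CS * p x - C x\<bar> \<le> \<bar>C x - n * p x\<bar> + \<bar>CS - n\<bar> * p x" using p0 by (simp add: abs_mult)
    qed
    also have "\<dots> = (\<Sum>x\<in>UNIV. \<bar>C x - n * p x\<bar>) + \<bar>CS - n\<bar>"
      using p1 by (simp add: sum.distrib sum_distrib_left[symmetric])
    also have "\<dots> \<le> K * M + K * M"
    proof (rule add_mono)
      show "(\<Sum>x\<in>UNIV. \<bar>C x - n * p x\<bar>) \<le> K * M"
      proof -
        have "(\<Sum>x\<in>UNIV. \<bar>C x - n * p x\<bar>) \<le> (\<Sum>x\<in>(UNIV :: 'x set). M)" using dev by (intro sum_mono) (simp add: less_imp_le)
        then show ?thesis unfolding K_def by simp
      qed
      show "\<bar>CS - n\<bar> \<le> K * M" using sd unfolding CS_def .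
    qed
    finally show "(\<Sum>x\<in>UNIV. \<bar>CS * p x - C x\<bar>) \<le> K * M + K * M" .
  qed (use CS in simp)
  also have "\<dots> \<le> (K * M + K * M) / (3 * n / 4)"
  proof (rule divide_left_mono)
    show "0 \<le> K * M + K * M"
    proof -
      have "0 \<le> \<bar>C undefined - n * p undefined\<bar>" by simp
      then have "M > 0" using dev by (meson le_less_trans)
      then show ?thesis unfolding K_def by simp
    qed
    show "3 * n / 4 \<le> CS" using C34 unfolding CS_def .
    show "0 < CS * (3 * n / 4)" using CS n by simp
  qed
  also have "\<dots> = 8 * K * M / (3 * n)" by (simp add: field_simps)
  finally show "(\<Sum>x\<in>UNIV. \<bar>p x - C x / (\<Sum>y\<in>UNIV. C y)\<bar>) \<le> 8 * real (card (UNIV :: 'x set)) * M / (3 * n)"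
    unfolding CS_def K_def .
qed


lemma Rval_shape: "Rval T P D R \<pi> = (\<Sum>s\<in>UNIV. \<Sum>a\<in>UNIV. mu_bar T P \<pi> D s * \<pi> s a * R s a)"
  unfolding Rval_def Lam_def by simp

lemma final_opt:
  fixes P P' :: "grp \<times> 's::finite \<Rightarrow> 'a::finite \<Rightarrow> grp \<times> 's \<Rightarrow> real"
  assumes errR: "\<forall>\<pi>. is_policy \<pi> \<longrightarrow> \<bar>Rval T P' D R \<pi> - Rval T P D R \<pi>\<bar> \<le> \<epsilon> / 12"
    and errr: "\<forall>\<pi> z. is_policy \<pi> \<longrightarrow> \<bar>rho_grp T P' D \<rho> \<pi> z - rho_grp T P D \<rho> \<pi> z\<bar> \<le> \<epsilon> / 12"
    and eps: "\<epsilon> > 0"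
    and pistar_in: "pistar \<in> PiDP T P D \<rho> (\<epsilon> / 4)"
    and pistar_max: "\<forall>\<pi>\<in>PiDP T P D \<rho> (\<epsilon> / 4). Rval T P D R \<pi> \<le> Rval T P D R pistar"
  shows "PiDP T P' D \<rho> (\<epsilon> / 2) \<noteq> {} \<and>
         (\<forall>pihat. (pihat \<in> PiDP T P' D \<rho> (\<epsilon> / 2) \<and>
                  (\<forall>\<pi>\<in>PiDP T P' D \<rho> (\<epsilon> / 2). Rval T P' D R \<pi> \<le> Rval T P' D R pihat))
                \<longrightarrow> pihat \<in> PiDP T P D \<rho> \<epsilon> \<and>
                    Rval T P D R pistar - Rval T P D R pihat \<le> \<epsilon>)"
proof -
  have ps: "is_policy pistar" using pistar_in unfolding PiDP_def by simp
  have ps_fair: "\<bar>rho_grp T P D \<rho> pistar Maj - rho_grp T P D \<rho> pistar Min\<bar> \<le> \<epsilon> / 4"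
    using pistar_in unfolding PiDP_def by simp
  have e1: "\<bar>rho_grp T P' D \<rho> pistar Maj - rho_grp T P D \<rho> pistar Maj\<bar> \<le> \<epsilon> / 12"
    and e2: "\<bar>rho_grp T P' D \<rho> pistar Min - rho_grp T P D \<rho> pistar Min\<bar> \<le> \<epsilon> / 12"
    using errr ps by auto
  have "\<bar>rho_grp T P' D \<rho> pistar Maj - rho_grp T P' D \<rho> pistar Min\<bar> \<le> \<epsilon> / 2"
    using ps_fair e1 e2 eps unfolding abs_le_iff by linarith
  then have pin: "pistar \<in> PiDP T P' D \<rho> (\<epsilon> / 2)"
    unfolding PiDP_def using ps by simp
  show ?thesis
  proof (intro conjI allI impI)
    show "PiDP T P' D \<rho> (\<epsilon> / 2) \<noteq> {}" using pin by blast
  next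
    fix pihat
    assume h: "pihat \<in> PiDP T P' D \<rho> (\<epsilon> / 2) \<and>
                  (\<forall>\<pi>\<in>PiDP T P' D \<rho> (\<epsilon> / 2). Rval T P' D R \<pi> \<le> Rval T P' D R pihat)"
    have ph: "is_policy pihat" using h unfolding PiDP_def by simp
    have ph_fair: "\<bar>rho_grp T P' D \<rho> pihat Maj - rho_grp T P' D \<rho> pihat Min\<bar> \<le> \<epsilon> / 2"
      using h unfolding PiDP_def by simp
    have f1: "\<bar>rho_grp T P' D \<rho> pihat Maj - rho_grp T P D \<rho> pihat Maj\<bar> \<le> \<epsilon> / 12"
      and f2: "\<bar>rho_grp T P' D \<rho> pihat Min - rho_grp T P D \<rho> pihat Min\<bar> \<le> \<epsilon> / 12"
      using errr ph by auto
    have "\<bar>rho_grp T P D \<rho> pihat Maj - rho_grp T P D \<rho> pihat Min\<bar> \<le> \<epsilon>"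
      using ph_fair f1 f2 eps unfolding abs_le_iff by linarith
    then show "pihat \<in> PiDP T P D \<rho> \<epsilon>"
      unfolding PiDP_def using ph by simp
    have m: "Rval T P' D R pistar \<le> Rval T P' D R pihat" using h pin by blast
    have g1: "\<bar>Rval T P' D R pistar - Rval T P D R pistar\<bar> \<le> \<epsilon> / 12" using errR ps by auto
    have g2: "\<bar>Rval T P' D R pihat - Rval T P D R pihat\<bar> \<le> \<epsilon> / 12" using errR ph by auto
    show "Rval T P D R pistar - Rval T P D R pihat \<le> \<epsilon>"
      using m g1 g2 eps unfolding abs_le_iff by linarith
  qed
qed

lemma uniform_policy: "is_policy (\<lambda>(s::'st::finite) (a::'a::finite). 1 / real (card (UNIV :: 'a set)))"
  unfolding is_policy_def by simp

lemma trivial_opt: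
  fixes P P' :: "grp \<times> 's::finite \<Rightarrow> 'a::finite \<Rightarrow> grp \<times> 's \<Rightarrow> real"
  assumes T: "T \<ge> 1" and D: "is_distr D" and P: "is_kernel P" and P': "is_kernel P'"
    and pmaj: "p_grp D Maj > 0" and pmin: "p_grp D Min > 0"
    and Rbd: "\<forall>s a. \<bar>R s a\<bar> \<le> Rmax" and rhobd: "\<forall>s a. \<bar>\<rho> s a\<bar> \<le> Rmax"
    and big: "4 * Rmax \<le> \<epsilon>"
    and pistar_in: "pistar \<in> PiDP T P D \<rho> (\<epsilon> / 4)"
  shows "PiDP T P' D \<rho> (\<epsilon> / 2) \<noteq> {} \<and>
         (\<forall>pihat. (pihat \<in> PiDP T P' D \<rho> (\<epsilon> / 2) \<and>
                  (\<forall>\<pi>\<in>PiDP T P' D \<rho> (\<epsilon> / 2). Rval T P' D R \<pi> \<le> Rval T P' D R pihat))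
                \<longrightarrow> pihat \<in> PiDP T P D \<rho> \<epsilon> \<and>
                    Rval T P D R pistar - Rval T P D R pihat \<le> \<epsilon>)"
proof -
  have Dz: "is_distr (D_grp D z)" for z
    using D_grp_distr[OF D] pmaj pmin by (cases z) auto
  have rb: "\<bar>rho_grp T PP D \<rho> \<pi> z\<bar> \<le> Rmax" if "is_kernel PP" "is_policy \<pi>" for PP :: "grp \<times> 's \<Rightarrow> 'a \<Rightarrow> grp \<times> 's \<Rightarrow> real" and \<pi> z
    unfolding rho_grp_def by (rule val_bound[OF T Dz that rhobd])
  have Rb: "\<bar>Rval T PP D R \<pi>\<bar> \<le> Rmax" if "is_kernel PP" "is_policy \<pi>" for PP :: "grp \<times> 's \<Rightarrow> 'a \<Rightarrow> grp \<times> 's \<Rightarrow> real" and \<pi>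
    unfolding Rval_shape by (rule val_bound[OF T D that Rbd])
  have allin: "\<pi> \<in> PiDP T P' D \<rho> (\<epsilon> / 2)" if "is_policy \<pi>" for \<pi>
  proof -
    have "\<bar>rho_grp T P' D \<rho> \<pi> Maj\<bar> \<le> Rmax" "\<bar>rho_grp T P' D \<rho> \<pi> Min\<bar> \<le> Rmax"
      using rb[OF P' that] by auto
    then have "\<bar>rho_grp T P' D \<rho> \<pi> Maj - rho_grp T P' D \<rho> \<pi> Min\<bar> \<le> \<epsilon> / 2"
      using big unfolding abs_le_iff by linarith
    then show ?thesis unfolding PiDP_def using that by simp
  qed
  show ?thesis
  proof (intro conjI allI impI)
    show "PiDP T P' D \<rho> (\<epsilon> / 2) \<noteq> {}" using allin[OF uniform_policy] by blast
  next
    fix pihat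
    assume h: "pihat \<in> PiDP T P' D \<rho> (\<epsilon> / 2) \<and>
                  (\<forall>\<pi>\<in>PiDP T P' D \<rho> (\<epsilon> / 2). Rval T P' D R \<pi> \<le> Rval T P' D R pihat)"
    have ph: "is_policy pihat" using h unfolding PiDP_def by simp
    have ps: "is_policy pistar" using pistar_in unfolding PiDP_def by simp
    have "\<bar>rho_grp T P D \<rho> pihat Maj\<bar> \<le> Rmax" "\<bar>rho_grp T P D \<rho> pihat Min\<bar> \<le> Rmax"
      using rb[OF P ph] by auto
    then have "\<bar>rho_grp T P D \<rho> pihat Maj - rho_grp T P D \<rho> pihat Min\<bar> \<le> \<epsilon>"
      using big unfolding abs_le_iff by linarith
    then show "pihat \<in> PiDP T P D \<rho> \<epsilon>" unfolding PiDP_def using ph by simp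
    have "\<bar>Rval T P D R pistar\<bar> \<le> Rmax" "\<bar>Rval T P D R pihat\<bar> \<le> Rmax" using Rb[OF P ps] Rb[OF P ph] by auto
    then show "Rval T P D R pistar - Rval T P D R pihat \<le> \<epsilon>" using big unfolding abs_le_iff by linarith
  qed
qed


lemma sum_list_shift2: "sum_list (map (\<lambda>tr. m - X tr) ds) = real (length ds) * m - sum_list (map X ds)"
  for X :: "'x \<Rightarrow> real"
  by (induction ds) (simp_all add: algebra_simps)

theorem theorem8:
  fixes T N0 :: nat
    and D :: "grp \<times> 's::finite \<Rightarrow> real"
    and P Q :: "grp \<times> 's \<Rightarrow> 'a::finite \<Rightarrow> grp \<times> 's \<Rightarrow> real"
    and R \<rho> pi0 pistar :: "grp \<times> 's \<Rightarrow> 'a \<Rightarrow> real"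
    and Rmax lam0 \<epsilon> \<delta> :: real
  assumes T: "T \<ge> 1"
    and D: "is_distr D"
    and P: "is_kernel P"
    and Q: "is_kernel Q"
    and pmaj: "p_grp D Maj > 0" and pmin: "p_grp D Min > 0"
    and Rmax: "Rmax > 0"
    and Rbd: "\<forall>s a. \<bar>R s a\<bar> \<le> Rmax" and rhobd: "\<forall>s a. \<bar>\<rho> s a\<bar> \<le> Rmax"
    and pi0_pol: "is_policy pi0"
    and lam0_pos: "lam0 > 0" and Lam0: "\<forall>s a. Lam T P D pi0 s a \<ge> lam0"
    and eps: "\<epsilon> > 0" and delta: "\<delta> > 0"
    and N0: "real N0 \<ge> 128 * real T ^ 2 * real (card (UNIV :: (grp \<times> 's) set)) ^ 2 * Rmax ^ 2
                 * ln (2 * real (card (UNIV :: (grp \<times> 's) set)) ^ 2 * real (card (UNIV :: 'a set)) / \<delta>)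
               / (lam0 ^ 2 * \<epsilon> ^ 2)"
    and nonempty: "PiDP T P D \<rho> (\<epsilon> / 4) \<noteq> {}"
    and pistar_in: "pistar \<in> PiDP T P D \<rho> (\<epsilon> / 4)"
    and pistar_max: "\<forall>\<pi>\<in>PiDP T P D \<rho> (\<epsilon> / 4). Rval T P D R \<pi> \<le> Rval T P D R pistar"
  shows "data_prob T N0 D P pi0
           (\<lambda>ds. PiDP T (P_hat Q ds) D \<rho> (\<epsilon> / 2) \<noteq> {} \<and>
                 (\<forall>pihat. (pihat \<in> PiDP T (P_hat Q ds) D \<rho> (\<epsilon> / 2) \<and>
                          (\<forall>\<pi>\<in>PiDP T (P_hat Q ds) D \<rho> (\<epsilon> / 2).
                              Rval T (P_hat Q ds) D R \<pi> \<le> Rval T (P_hat Q ds) D R pihat))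
                        \<longrightarrow> pihat \<in> PiDP T P D \<rho> \<epsilon> \<and>
                            Rval T P D R pistar - Rval T P D R pihat \<le> \<epsilon>))
         \<ge> 1 - \<delta>"
  proof -
  define S where "S = real (card (UNIV :: (grp \<times> 's) set))"
  define Ac where "Ac = real (card (UNIV :: 'a set))"
  have S0: "S > 0" unfolding S_def by simp
  have Ac0: "Ac > 0" unfolding Ac_def by simp
  define E where "E = (\<lambda>ds. PiDP T (P_hat Q ds) D \<rho> (\<epsilon> / 2) \<noteq> {} \<and>
                 (\<forall>pihat. (pihat \<in> PiDP T (P_hat Q ds) D \<rho> (\<epsilon> / 2) \<and>
                          (\<forall>\<pi>\<in>PiDP T (P_hat Q ds) D \<rho> (\<epsilon> / 2).
                              Rval T (P_hat Q ds) D R \<pi> \<le> Rval T (P_hat Q ds) D R pihat))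
                        \<longrightarrow> pihat \<in> PiDP T P D \<rho> \<epsilon> \<and>
                            Rval T P D R pistar - Rval T P D R pihat \<le> \<epsilon>))"
  have Pk: "is_kernel (P_hat Q ds)" for ds by (rule P_hat_kernel[OF Q])
  have main: "data_prob T N0 D P pi0 E \<ge> 1 - \<delta>"
  proof (cases "4 * Rmax \<le> \<epsilon>")
    case True
    have "E ds" for ds
      unfolding E_def using trivial_opt[OF T D P Pk pmaj pmin Rbd rhobd True pistar_in] by blast
    then have "data_prob T N0 D P pi0 (\<lambda>_. True) \<le> data_prob T N0 D P pi0 E"
      by (intro data_mono[OF D P pi0_pol]) auto
    then show ?thesis using data_total[OF D P pi0_pol T] delta by simp
  next
    case False
    then have small_eps: "\<epsilon> < 4 * Rmax" by simp
    define u where "u = lam0 * \<epsilon> / (16 * S * Rmax)"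
    have u0: "u > 0" unfolding u_def using lam0_pos eps S0 Rmax by simp
    define Good where "Good = (\<lambda>ds. \<forall>s a s'. \<bar>real (count_sas ds s a s') - real N0 * real T * Lam T P D pi0 s a * P s a s'\<bar> < real N0 * u)"
    have det: "E ds" if G: "Good ds" for ds
    proof -
      have Gx: "\<bar>real (count_sas ds s a s') - real N0 * real T * Lam T P D pi0 s a * P s a s'\<bar> < real N0 * u" for s a s'
        using G unfolding Good_def by blast
      have "0 < real N0 * u" using Gx[of undefined undefined undefined] abs_ge_zero by (meson le_less_trans)
      then have N0pos: "real N0 > 0" using u0 by (simp add: zero_less_mult_iff)
      have Tpos: "real T > 0" using T by simp
      define e where "e = \<epsilon> / (6 * real T * Rmax)"
      have e0: "e \<ge> 0" unfolding e_def using eps Tpos Rmax by simp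
      have L1: "\<forall>s a. (\<Sum>s'\<in>UNIV. \<bar>P s a s' - P_hat Q ds s a s'\<bar>) \<le> e"
      proof (intro allI)
        fix s a
        define C where "C s' = real (count_sas ds s a s')" for s'
        define n where "n = real N0 * real T * Lam T P D pi0 s a"
        have Lg: "Lam T P D pi0 s a \<ge> lam0" using Lam0 by blast
        have Lpos: "Lam T P D pi0 s a > 0" using Lg lam0_pos by linarith
        have npos: "n > 0" unfolding n_def using N0pos Tpos Lpos by simp
        have dev: "\<forall>x. \<bar>C x - n * P s a x\<bar> < real N0 * u" using Gx unfolding C_def n_def by blast
        have p0: "\<forall>x. P s a x \<ge> 0" using P unfolding is_kernel_def by blast
        have p1: "(\<Sum>x\<in>UNIV. P s a x) = 1" using P unfolding is_kernel_def by blast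
        have Su: "S * u = lam0 * (\<epsilon> / (16 * Rmax))" unfolding u_def using S0 by (simp add: field_simps)
        have "\<epsilon> / (16 * Rmax) \<le> 1 / 4" using small_eps Rmax by (simp add: field_simps)
        then have "S * u \<le> lam0 * (1 / 4)" unfolding Su using lam0_pos by (intro mult_left_mono) auto
        also have "lam0 \<le> real T * Lam T P D pi0 s a"
        proof -
          have "1 * Lam T P D pi0 s a \<le> real T * Lam T P D pi0 s a" using T Lpos by (intro mult_right_mono) auto
          then show ?thesis using Lg by simp
        qed
        then have "lam0 * (1 / 4) \<le> real T * Lam T P D pi0 s a / 4" by simp
        finally have "real N0 * (S * u) \<le> real N0 * (real T * Lam T P D pi0 s a / 4)"
          using N0pos by (intro mult_left_mono) auto
        then have small: "real (card (UNIV :: (grp \<times> 's) set)) * (real N0 * u) \<le> n / 4"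
          unfolding n_def S_def[symmetric] by (simp add: algebra_simps)
        note l1 = l1_lemma[OF dev p0 p1 small npos]
        have CS: "(\<Sum>x\<in>UNIV. C x) > 0" using l1(1) npos by linarith
        have csa: "real (count_sa ds s a) = (\<Sum>x\<in>UNIV. C x)"
          unfolding C_def count_sa_sum of_nat_sum ..
        then have nz: "count_sa ds s a \<noteq> 0" using CS by auto
        have Ph: "P_hat Q ds s a s' = C s' / (\<Sum>x\<in>UNIV. C x)" for s'
        proof -
          have "P_hat Q ds s a s' = C s' / real (count_sa ds s a)" unfolding P_hat_def C_def using nz by simp
          then show ?thesis unfolding csa .
        qed
        have "(\<Sum>s'\<in>UNIV. \<bar>P s a s' - P_hat Q ds s a s'\<bar>) \<le> 8 * S * (real N0 * u) / (3 * n)"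
          unfolding Ph S_def using l1(2) .
        also have "8 * S * (real N0 * u) / (3 * n) = (lam0 / Lam T P D pi0 s a) * e"
          unfolding u_def e_def n_def using S0 N0pos Tpos Lpos Rmax by (simp add: field_simps)
        also have "\<dots> \<le> 1 * e" using Lg lam0_pos Lpos e0 by (intro mult_right_mono) (auto simp: divide_le_eq)
        finally show "(\<Sum>s'\<in>UNIV. \<bar>P s a s' - P_hat Q ds s a s'\<bar>) \<le> e" by simp
      qed
      have err: "Rmax * (real T * e / 2) = \<epsilon> / 12" unfolding e_def using Tpos Rmax by (simp add: field_simps)
      have errR: "\<forall>\<pi>. is_policy \<pi> \<longrightarrow> \<bar>Rval T (P_hat Q ds) D R \<pi> - Rval T P D R \<pi>\<bar> \<le> \<epsilon> / 12"
      proof (intro allI impI)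
        fix \<pi> :: "grp \<times> 's \<Rightarrow> 'a \<Rightarrow> real" assume pol: "is_policy \<pi>"
        show "\<bar>Rval T (P_hat Q ds) D R \<pi> - Rval T P D R \<pi>\<bar> \<le> \<epsilon> / 12"
          using val_diff[OF T D P Pk pol L1 e0 Rbd] unfolding Rval_shape err by (simp add: abs_minus_commute)
      qed
      have Dz: "is_distr (D_grp D z)" for z
        using D_grp_distr[OF D] pmaj pmin by (cases z) auto
      have errr: "\<forall>\<pi> z. is_policy \<pi> \<longrightarrow> \<bar>rho_grp T (P_hat Q ds) D \<rho> \<pi> z - rho_grp T P D \<rho> \<pi> z\<bar> \<le> \<epsilon> / 12"
      proof (intro allI impI)
        fix \<pi> :: "grp \<times> 's \<Rightarrow> 'a \<Rightarrow> real" and z assume pol: "is_policy \<pi>"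
        show "\<bar>rho_grp T (P_hat Q ds) D \<rho> \<pi> z - rho_grp T P D \<rho> \<pi> z\<bar> \<le> \<epsilon> / 12"
          using val_diff[OF T Dz P Pk pol L1 e0 rhobd] unfolding rho_grp_def err by (simp add: abs_minus_commute)
      qed
      show "E ds" unfolding E_def using final_opt[OF errR errr eps pistar_in pistar_max] .
    qed
    have prob: "data_prob T N0 D P pi0 (\<lambda>ds. \<not> Good ds) \<le> \<delta>"
    proof -
      define X where "X x tr = real (length (filter (\<lambda>y. y = x) tr))" for x :: "(grp \<times> 's) \<times> 'a \<times> (grp \<times> 's)" and tr
      define m where "m x = real T * Lam T P D pi0 (fst x) (fst (snd x)) * P (fst x) (fst (snd x)) (snd (snd x))"
        for x :: "(grp \<times> 's) \<times> 'a \<times> (grp \<times> 's)"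
      define I where "I = (UNIV :: ((grp \<times> 's) \<times> 'a \<times> (grp \<times> 's)) set) \<times> (UNIV :: bool set)"
      define B where "B i ds = (if snd i then real N0 * u \<le> sum_list (map (\<lambda>tr. X (fst i) tr - m (fst i)) ds)
                                else real N0 * u \<le> sum_list (map (\<lambda>tr. m (fst i) - X (fst i) tr) ds))"
        for i :: "((grp \<times> 's) \<times> 'a \<times> (grp \<times> 's)) \<times> bool" and ds
      define q where "q = \<delta> / (2 * S ^ 2 * Ac)"
      have step1: "data_prob T N0 D P pi0 (\<lambda>ds. \<not> Good ds) \<le> data_prob T N0 D P pi0 (\<lambda>ds. \<exists>i\<in>I. B i ds)"
      proof (rule data_mono[OF D P pi0_pol])
        fix ds assume ds: "ds \<in> datasets T N0" and nG: "\<not> Good ds"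
        have len: "length ds = N0" using ds unfolding datasets_def by simp
        obtain s a s' where bad: "\<not> \<bar>real (count_sas ds s a s') - real N0 * real T * Lam T P D pi0 s a * P s a s'\<bar> < real N0 * u"
          using nG unfolding Good_def by blast
        define x where "x = (s, a, s')"
        have cnt: "real (count_sas ds s a s') = sum_list (map (X x) ds)"
          unfolding count_sas_sum X_def x_def ..
        have mm: "real N0 * real T * Lam T P D pi0 s a * P s a s' = real N0 * m x"
          unfolding m_def x_def by simp
        have sh1: "sum_list (map (\<lambda>tr. X x tr - m x) ds) = sum_list (map (X x) ds) - real N0 * m x"
          using sum_list_shift[of "X x" "m x" ds] len by simp
        have sh2: "sum_list (map (\<lambda>tr. m x - X x tr) ds) = real N0 * m x - sum_list (map (X x) ds)"
          using sum_list_shift2[of "m x" "X x" ds] len by simp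
        show "\<exists>i\<in>I. B i ds"
        proof (cases "real N0 * u \<le> sum_list (map (X x) ds) - real N0 * m x")
          case True
          then have "B (x, True) ds" unfolding B_def using sh1 by simp
          then show ?thesis unfolding I_def by blast
        next
          case False
          then have "real N0 * u \<le> real N0 * m x - sum_list (map (X x) ds)"
            using bad unfolding cnt mm by linarith
          then have "B (x, False) ds" unfolding B_def using sh2 by simp
          then show ?thesis unfolding I_def by blast
        qed
      qed
      have step2: "data_prob T N0 D P pi0 (\<lambda>ds. \<exists>i\<in>I. B i ds) \<le> (\<Sum>i\<in>I. data_prob T N0 D P pi0 (B i))"
        by (rule data_union[OF D P pi0_pol]) (simp add: I_def)
      have tb: "exp (- 2 * real N0 * u\<^sup>2 / (real T)\<^sup>2) \<le> q"
      proof -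
        define Lg where "Lg = ln (2 * S ^ 2 * Ac / \<delta>)"
        have Tpos: "real T > 0" using T by simp
        have hyp: "real N0 \<ge> 128 * real T ^ 2 * S ^ 2 * Rmax ^ 2 * Lg / (lam0 ^ 2 * \<epsilon> ^ 2)"
          using N0 unfolding Lg_def S_def Ac_def .
        have den: "lam0 ^ 2 * \<epsilon> ^ 2 > 0" using lam0_pos eps by simp
        have h2: "128 * real T ^ 2 * S ^ 2 * Rmax ^ 2 * Lg \<le> real N0 * (lam0 ^ 2 * \<epsilon> ^ 2)"
          using hyp den by (simp add: pos_divide_le_eq)
        have K: "128 * real T ^ 2 * S ^ 2 * Rmax ^ 2 > 0" using Tpos S0 Rmax by simp
        have eq: "2 * real N0 * u\<^sup>2 / (real T)\<^sup>2 = real N0 * (lam0 ^ 2 * \<epsilon> ^ 2) / (128 * real T ^ 2 * S ^ 2 * Rmax ^ 2)"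
          unfolding u_def using Tpos S0 Rmax by (simp add: field_simps power2_eq_square)
        have "Lg \<le> 2 * real N0 * u\<^sup>2 / (real T)\<^sup>2"
          unfolding eq using h2 K by (simp add: pos_le_divide_eq mult.commute)
        then have "exp (- (2 * real N0 * u\<^sup>2 / (real T)\<^sup>2)) \<le> exp (- Lg)" by simp
        also have "exp (- Lg) = q"
        proof -
          have pos: "2 * S ^ 2 * Ac / \<delta> > 0" using S0 Ac0 delta by simp
          have "exp (- Lg) = inverse (2 * S ^ 2 * Ac / \<delta>)" unfolding Lg_def exp_minus using pos by simp
          then show ?thesis unfolding q_def by (simp add: field_simps)
        qed
        finally show ?thesis by simp
      qed
      have step3: "data_prob T N0 D P pi0 (B i) \<le> q" for i
      proof -
        obtain s0 a0 s1 b where i: "i = ((s0, a0, s1), b)" by (metis prod_cases3 prod.collapse)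
        define x where "x = (s0, a0, s1)"
        have tot: "(\<Sum>tr\<in>{tr. valid_traj T tr}. traj_prob D P pi0 tr) = 1" by (rule traj_total[OF D P pi0_pol T])
        have pnn: "traj_prob D P pi0 tr \<ge> 0" for tr by (rule traj_prob_nonneg[OF D P pi0_pol])
        have mean: "(\<Sum>tr\<in>{tr. valid_traj T tr}. traj_prob D P pi0 tr * X x tr) = m x"
          unfolding X_def m_def x_def using exp_count[OF D P pi0_pol T] by simp
        have Xb: "\<forall>tr\<in>{tr. valid_traj T tr}. 0 \<le> X x tr \<and> X x tr \<le> real T"
          unfolding X_def valid_traj_def by (auto intro: length_filter_le[THEN order.trans])
        have m0: "m x \<ge> 0" unfolding mean[symmetric] using Xb pnn by (intro sum_nonneg) auto
        have mT: "m x \<le> real T"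
        proof -
          have "m x \<le> (\<Sum>tr\<in>{tr. valid_traj T tr}. traj_prob D P pi0 tr * real T)"
            unfolding mean[symmetric] using Xb pnn by (intro sum_mono mult_left_mono) auto
          also have "\<dots> = real T" using tot by (simp add: sum_distrib_right[symmetric])
          finally show ?thesis .
        qed
        have mean1: "(\<Sum>tr\<in>{tr. valid_traj T tr}. traj_prob D P pi0 tr * (X x tr - m x)) = 0"
          using mean tot by (simp add: right_diff_distrib sum_subtractf sum_distrib_right[symmetric])
        have mean2: "(\<Sum>tr\<in>{tr. valid_traj T tr}. traj_prob D P pi0 tr * (m x - X x tr)) = 0"
          using mean tot by (simp add: right_diff_distrib sum_subtractf sum_distrib_right[symmetric])
        show ?thesis
        proof (cases b)
          case True
          have "B i = (\<lambda>ds. real N0 * u \<le> sum_list (map (\<lambda>tr. X x tr - m x) ds))"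
            unfolding i B_def x_def using True by simp
          moreover have "data_prob T N0 D P pi0 (\<lambda>ds. real N0 * u \<le> sum_list (map (\<lambda>tr. X x tr - m x) ds))
              \<le> exp (- 2 * real N0 * u\<^sup>2 / (real T)\<^sup>2)"
            by (rule tail_gen[OF D P pi0_pol T u0 _ _ _ _ mean1, where a = "- m x" and b = "real T - m x"])
               (use Xb m0 mT in auto)
          ultimately show ?thesis using tb by simp
        next
          case False
          have "B i = (\<lambda>ds. real N0 * u \<le> sum_list (map (\<lambda>tr. m x - X x tr) ds))"
            unfolding i B_def x_def using False by simp
          moreover have "data_prob T N0 D P pi0 (\<lambda>ds. real N0 * u \<le> sum_list (map (\<lambda>tr. m x - X x tr) ds))
              \<le> exp (- 2 * real N0 * u\<^sup>2 / (real T)\<^sup>2)"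
            by (rule tail_gen[OF D P pi0_pol T u0 _ _ _ _ mean2, where a = "m x - real T" and b = "m x"])
               (use Xb m0 mT in auto)
          ultimately show ?thesis using tb by simp
        qed
      qed
      have step4: "(\<Sum>i\<in>I. data_prob T N0 D P pi0 (B i)) \<le> (\<Sum>i\<in>I. q)"
        using step3 by (rule sum_mono)
      have cardI: "real (card I) = S * Ac * S * 2"
        unfolding I_def S_def Ac_def by (simp add: card_cartesian_product)
      have step5: "(\<Sum>i\<in>I. q) = \<delta>"
        using cardI S0 Ac0 unfolding q_def by (simp add: power2_eq_square field_simps)
      show ?thesis using step1 step2 step4 step5 by linarith
    qed
    have "data_prob T N0 D P pi0 Good \<le> data_prob T N0 D P pi0 E"
      using det by (intro data_mono[OF D P pi0_pol])
    moreover have "data_prob T N0 D P pi0 Good = 1 - data_prob T N0 D P pi0 (\<lambda>ds. \<not> Good ds)"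
      by (rule data_compl[OF D P pi0_pol T])
    ultimately show ?thesis using prob by linarith
  qed
  then show ?thesis unfolding E_def .
qed


end
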